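(* Let $1\le p<\infty$ and $\psi\in H(\mathbb{D})$. Then the following are equivalent: (a) the multiplication operator $M_\psi: S_2^p\to S_2^p$, $M_\psi f=\psi f$, is bounded; (b) $\psi\in S_2^p$ and the multiplication operators $M_{2\psi'}: H^p\to H^p$ and $M_\psi: H^p\to H^p$ are bounded; (c) $\psi\in S_2^p$ and $$\sup_{a\in\mathbb{D}}\int_{\partial\mathbb{D}}\frac{1-|a|^2}{|1-\overline{a}w|^2}\,|2\psi'(w)|^p\,d\sigma(w)<\infty\quad\text{and}\quad\sup_{a\in\mathbb{D}}\int_{\partial\mathbb{D}}\frac{1-|a|^2}{|1-\overline{a}w|^2}\,|\psi(w)|^p\,d\sigma(w)<\infty.$$
   Context: $\mathbb{D}$ is the open unit disc, $\partial\mathbb{D}$ the unit circle with normalized arc length measure $d\sigma$, $H(\mathbb{D})$ the space of analytic functions on $\mathbb{D}$. For $1\le p<\infty$, $H^p$ is the Hardy space of $f\in H(\mathbb{D})$ with $\|f\|_{H^p}^p=\sup_{0<r<1}\frac{1}{2\pi}\int_0^{2\pi}|f(re^{i\theta})|^p\,d\theta<\infty$. $S_2^p=\{f\in H(\mathbb{D}): f''\in H^p\}$ with norm $\|f\|_{S_2^p}=|f(0)|+|f'(0)|+\|f''\|_{H^p}$. For $u\in H(\mathbb{D})$, $M_u f=uf$. In integrals over $\partial\mathbb{D}$, functions are understood via their boundary (radial limit) values. *)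

theory Defs
  imports "HOL-Complex_Analysis.Complex_Analysis"
begin

definition circle_mean :: "real \<Rightarrow> (complex \<Rightarrow> complex) \<Rightarrow> real \<Rightarrow> ennreal" where
  "circle_mean p f r =
     ennreal (1 / (2 * pi)) *
     (\<integral>\<^sup>+ \<theta>. indicator {0..2*pi} \<theta> *
        ennreal (norm (f (complex_of_real r * cis \<theta>)) powr p) \<partial>lborel)"

definition hardy :: "real \<Rightarrow> (complex \<Rightarrow> complex) set" where
  "hardy p = {f. f holomorphic_on ball 0 1 \<and>
                 (SUP r\<in>{0<..<1}. circle_mean p f r) < \<infinity>}"

definition hardy_norm :: "real \<Rightarrow> (complex \<Rightarrow> complex) \<Rightarrow> real" where
  "hardy_norm p f = enn2real (SUP r\<in>{0<..<1}. circle_mean p f r) powr (1 / p)"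

definition S2p :: "real \<Rightarrow> (complex \<Rightarrow> complex) set" where
  "S2p p = {f. f holomorphic_on ball 0 1 \<and> deriv (deriv f) \<in> hardy p}"

definition S2p_norm :: "real \<Rightarrow> (complex \<Rightarrow> complex) \<Rightarrow> real" where
  "S2p_norm p f = norm (f 0) + norm (deriv f 0) + hardy_norm p (deriv (deriv f))"

definition bounded_mult_op ::
  "(complex \<Rightarrow> complex) set \<Rightarrow> ((complex \<Rightarrow> complex) \<Rightarrow> real) \<Rightarrow> (complex \<Rightarrow> complex) \<Rightarrow> bool" where
  "bounded_mult_op X N u \<longleftrightarrow>
     (\<forall>f\<in>X. (\<lambda>z. u z * f z) \<in> X) \<and>
     (\<exists>C. \<forall>f\<in>X. N (\<lambda>z. u z * f z) \<le> C * N f)"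

text \<open>Boundary value of f at w on the unit circle: the radial limit.\<close>
definition radial_limit :: "(complex \<Rightarrow> complex) \<Rightarrow> complex \<Rightarrow> complex" where
  "radial_limit f w = Lim (at_left 1) (\<lambda>r. f (complex_of_real r * w))"

definition poisson_sup :: "real \<Rightarrow> (complex \<Rightarrow> complex) \<Rightarrow> ennreal" where
  "poisson_sup p g =
     (SUP a\<in>ball 0 1.
        ennreal (1 / (2 * pi)) *
        (\<integral>\<^sup>+ \<theta>. indicator {0..2*pi} \<theta> *
           ennreal ((1 - (norm a)\<^sup>2) / (norm (1 - cnj a * cis \<theta>))\<^sup>2 *
                    norm (radial_limit g (cis \<theta>)) powr p) \<partial>lborel))"

end

theory Submission
  imports Defs
begin


definition cm :: "real \<Rightarrow> (complex \<Rightarrow> complex) \<Rightarrow> real \<Rightarrow> real" where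
  "cm p f r = integral {0..2*pi} (\<lambda>\<theta>. norm (f (complex_of_real r * cis \<theta>)) powr p) / (2*pi)"

lemma cont_circ:
  assumes "continuous_on (ball 0 1) f" "0 \<le> r" "r < 1" "p > 0"
  shows "continuous_on {0..2*pi} (\<lambda>\<theta>. norm (f (complex_of_real r * cis \<theta>)) powr p)"
proof -
  have "continuous_on UNIV (\<lambda>\<theta>::real. complex_of_real r * cis \<theta>)"
    by (intro continuous_intros)
  moreover have "(\<lambda>\<theta>::real. complex_of_real r * cis \<theta>) ` UNIV \<subseteq> ball 0 1"
    using assms by (auto simp: norm_mult)
  ultimately have "continuous_on UNIV (\<lambda>\<theta>. f (complex_of_real r * cis \<theta>))"
    using continuous_on_compose2[OF assms(1)] by blast
  then have "continuous_on UNIV (\<lambda>\<theta>. norm (f (complex_of_real r * cis \<theta>)) powr p)"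
    using assms(4) by (intro continuous_on_powr') (auto intro: continuous_intros)
  then show ?thesis by (rule continuous_on_subset) auto
qed

lemma circle_mean_cm:
  assumes "continuous_on (ball 0 1) f" "0 \<le> r" "r < 1" "p > 0"
  shows "circle_mean p f r = ennreal (cm p f r)"
proof -
  let ?g = "\<lambda>\<theta>. norm (f (complex_of_real r * cis \<theta>)) powr p"
  have "(?g has_integral integral {0..2*pi} ?g) {0..2*pi}"
    by (rule integrable_integral[OF integrable_continuous_real[OF cont_circ[OF assms]]])
  from nn_integral_has_integral_lebesgue[OF _ this]
  have "(\<integral>\<^sup>+ \<theta>. ennreal (indicator {0..2*pi} \<theta> * ?g \<theta>) \<partial>lborel) = ennreal (integral {0..2*pi} ?g)"
    by simp
  moreover have "(\<lambda>\<theta>. ennreal (indicator {0..2*pi} \<theta> * ?g \<theta>)) = (\<lambda>\<theta>. indicator {0..2*pi} \<theta> * ennreal (?g \<theta>))"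
    by (auto simp: indicator_def fun_eq_iff)
  ultimately show ?thesis
    unfolding circle_mean_def cm_def
    by (simp add: ennreal_mult'[symmetric])
qed

lemma cm_nonneg: "cm p f r \<ge> 0"
proof -
  have "integral {0..2*pi} (\<lambda>\<theta>. norm (f (complex_of_real r * cis \<theta>)) powr p) \<ge> 0"
    by (cases "(\<lambda>\<theta>. norm (f (complex_of_real r * cis \<theta>)) powr p) integrable_on {0..2*pi}")
       (auto intro: integral_nonneg simp: not_integrable_integral)
  then show ?thesis unfolding cm_def by simp
qed

definition hs :: "real \<Rightarrow> (complex \<Rightarrow> complex) \<Rightarrow> real" where
  "hs p f = enn2real (SUP r\<in>{0<..<1}. circle_mean p f r)"

lemma hardy_norm_hs: "hardy_norm p f = hs p f powr (1/p)"
  unfolding hardy_norm_def hs_def by simp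

lemma hs_nonneg: "hs p f \<ge> 0" unfolding hs_def by simp

lemma SUP_cm:
  assumes "continuous_on (ball 0 1) f" "p > 0"
  shows "(SUP r\<in>{0<..<1}. circle_mean p f r) = (SUP r\<in>{0<..<1}. ennreal (cm p f r))"
  using circle_mean_cm[OF assms(1) _ _ assms(2)] by (intro SUP_cong) auto

lemma hardy_iff:
  assumes "p > 0"
  shows "f \<in> hardy p \<longleftrightarrow> f holomorphic_on ball 0 1 \<and> (\<exists>B. \<forall>r\<in>{0<..<1}. cm p f r \<le> B)"
proof
  assume f: "f \<in> hardy p"
  then have h: "f holomorphic_on ball 0 1" by (simp add: hardy_def)
  then have c: "continuous_on (ball 0 1) f" by (simp add: holomorphic_on_imp_continuous_on)
  have fin: "(SUP r\<in>{0<..<1}. ennreal (cm p f r)) < \<infinity>"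
    using f SUP_cm[OF c assms] by (simp add: hardy_def)
  have "\<forall>r\<in>{0<..<1}. cm p f r \<le> enn2real (SUP r\<in>{0<..<1}. ennreal (cm p f r))"
  proof
    fix r :: real assume r: "r \<in> {0<..<1}"
    have "ennreal (cm p f r) \<le> (SUP r\<in>{0<..<1}. ennreal (cm p f r))"
      using r by (intro SUP_upper)
    from enn2real_mono[OF this] fin show "cm p f r \<le> enn2real (SUP r\<in>{0<..<1}. ennreal (cm p f r))"
      using cm_nonneg by (simp add: top_unique)
  qed
  with h show "f holomorphic_on ball 0 1 \<and> (\<exists>B. \<forall>r\<in>{0<..<1}. cm p f r \<le> B)" by blast
next
  assume "f holomorphic_on ball 0 1 \<and> (\<exists>B. \<forall>r\<in>{0<..<1}. cm p f r \<le> B)"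
  then obtain B where h: "f holomorphic_on ball 0 1" and B: "\<forall>r\<in>{0<..<1}. cm p f r \<le> B" by blast
  then have c: "continuous_on (ball 0 1) f" by (simp add: holomorphic_on_imp_continuous_on)
  have "(SUP r\<in>{0<..<1}. ennreal (cm p f r)) \<le> ennreal B"
    using B by (intro SUP_least ennreal_leI) auto
  then have "(SUP r\<in>{0<..<1}. ennreal (cm p f r)) < \<infinity>"
    using le_less_trans by fastforce
  with h show "f \<in> hardy p" using SUP_cm[OF c assms] by (simp add: hardy_def)
qed

lemma cm_le_hs:
  assumes "f \<in> hardy p" "p > 0" "r \<in> {0<..<1}"
  shows "cm p f r \<le> hs p f"
proof -
  have h: "f holomorphic_on ball 0 1" using assms by (simp add: hardy_def)
  then have c: "continuous_on (ball 0 1) f" by (simp add: holomorphic_on_imp_continuous_on)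
  have fin: "(SUP r\<in>{0<..<1}. ennreal (cm p f r)) < \<infinity>"
    using assms SUP_cm[OF c assms(2)] by (simp add: hardy_def)
  have "ennreal (cm p f r) \<le> (SUP r\<in>{0<..<1}. ennreal (cm p f r))"
    using assms by (intro SUP_upper) auto
  from enn2real_mono[OF this] fin show ?thesis
    using cm_nonneg SUP_cm[OF c assms(2)] by (simp add: top_unique hs_def)
qed

lemma hs_le:
  assumes "continuous_on (ball 0 1) f" "p > 0" "\<And>r. r \<in> {0<..<1} \<Longrightarrow> cm p f r \<le> B"
  shows "hs p f \<le> B"
proof -
  have B0: "B \<ge> 0" using assms(3)[of "1/2"] cm_nonneg[of p f "1/2"] by simp
  have "(SUP r\<in>{0<..<1}. ennreal (cm p f r)) \<le> ennreal B"
    using assms by (intro SUP_least ennreal_leI) auto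
  then show ?thesis unfolding hs_def SUP_cm[OF assms(1,2)] by (rule enn2real_leI[OF B0])
qed

lemma cm_mono:
  assumes f: "continuous_on (ball 0 1) f" and g1: "continuous_on (ball 0 1) g1"
    and g2: "continuous_on (ball 0 1) g2" and r: "0 \<le> r" "r < 1" and p: "p > 0"
    and le: "\<And>z. z \<in> ball 0 1 \<Longrightarrow> norm (f z) powr p \<le> a * norm (g1 z) powr p + b * norm (g2 z) powr p + c"
  shows "cm p f r \<le> a * cm p g1 r + b * cm p g2 r + c"
proof -
  let ?F = "\<lambda>h \<theta>. norm (h (complex_of_real r * cis \<theta>)) powr p"
  have i1: "?F f integrable_on {0..2*pi}" "?F g1 integrable_on {0..2*pi}" "?F g2 integrable_on {0..2*pi}"
    using integrable_continuous_real[OF cont_circ[OF _ r p]] f g1 g2 by auto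
  have inb: "complex_of_real r * cis \<theta> \<in> ball 0 1" for \<theta> using r by (simp add: norm_mult)
  have i2: "(\<lambda>\<theta>. a * ?F g1 \<theta>) integrable_on {0..2*pi}" "(\<lambda>\<theta>. b * ?F g2 \<theta>) integrable_on {0..2*pi}"
    using integrable_on_cmult_left[OF i1(2)] integrable_on_cmult_left[OF i1(3)] by auto
  have i3: "(\<lambda>\<theta>. a * ?F g1 \<theta> + b * ?F g2 \<theta>) integrable_on {0..2*pi}"
    using integrable_add[OF i2] by simp
  have i4: "(\<lambda>\<theta>. a * ?F g1 \<theta> + b * ?F g2 \<theta> + c) integrable_on {0..2*pi}"
    using integrable_add[OF i3 integrable_const_ivl[of c 0 "2*pi"]] by simp
  have "integral {0..2*pi} (?F f) \<le> integral {0..2*pi} (\<lambda>\<theta>. a * ?F g1 \<theta> + b * ?F g2 \<theta> + c)"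
    using i1 i4 le[OF inb] by (intro integral_le) auto
  also have "\<dots> = a * integral {0..2*pi} (?F g1) + b * integral {0..2*pi} (?F g2) + c * (2*pi)"
    by (simp only: integral_add[OF i3 integrable_const_ivl] integral_add[OF i2] integral_mult_right)
       (simp add: mult.commute)
  finally show ?thesis unfolding cm_def by (simp add: field_simps)
qed

lemma cm_mono1:
  assumes f: "continuous_on (ball 0 1) f" and g1: "continuous_on (ball 0 1) g1"
    and r: "0 \<le> r" "r < 1" and p: "p > 0"
    and le: "\<And>z. z \<in> ball 0 1 \<Longrightarrow> norm (f z) powr p \<le> a * norm (g1 z) powr p"
  shows "cm p f r \<le> a * cm p g1 r"
  using cm_mono[OF f g1 g1 r p, of a 0 0] le by simp

lemma mult_hardy:
  assumes p: "p > 0" and u: "u holomorphic_on ball 0 1" and K: "\<And>z. z \<in> ball 0 1 \<Longrightarrow> norm (u z) \<le> K"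
    and f: "f \<in> hardy p"
  shows "(\<lambda>z. u z * f z) \<in> hardy p" "hardy_norm p (\<lambda>z. u z * f z) \<le> K * hardy_norm p f"
proof -
  have K0: "K \<ge> 0" using K[of 0] by (meson norm_ge_zero order_trans centre_in_ball zero_less_one)
  have fh: "f holomorphic_on ball 0 1" using f by (simp add: hardy_def)
  have uf: "(\<lambda>z. u z * f z) holomorphic_on ball 0 1" using u fh by (intro holomorphic_intros)
  have c: "continuous_on (ball 0 1) f" "continuous_on (ball 0 1) (\<lambda>z. u z * f z)"
    using fh uf by (auto intro: holomorphic_on_imp_continuous_on)
  have pt: "norm (u z * f z) powr p \<le> K powr p * norm (f z) powr p" if "z \<in> ball 0 1" for z
    using K[OF that] p by (simp add: norm_mult powr_mult powr_mono2 mult_right_mono)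
  have le: "cm p (\<lambda>z. u z * f z) r \<le> K powr p * hs p f" if "r \<in> {0<..<1}" for r
  proof -
    have "cm p (\<lambda>z. u z * f z) r \<le> K powr p * cm p f r"
      using that by (intro cm_mono1[OF c(2) c(1) _ _ p] pt) auto
    also have "\<dots> \<le> K powr p * hs p f"
      using cm_le_hs[OF f p that] by (simp add: mult_left_mono)
    finally show ?thesis .
  qed
  show "(\<lambda>z. u z * f z) \<in> hardy p" using le uf hardy_iff[OF p] by blast
  have "hs p (\<lambda>z. u z * f z) \<le> K powr p * hs p f" using le by (intro hs_le[OF c(2) p])
  then have "hardy_norm p (\<lambda>z. u z * f z) \<le> (K powr p * hs p f) powr (1/p)"
    unfolding hardy_norm_hs using p by (intro powr_mono2) (auto simp: hs_nonneg)
  also have "\<dots> = K * hardy_norm p f"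
    using p K0 hs_nonneg[of p f] by (simp add: powr_mult powr_powr hardy_norm_hs)
  finally show "hardy_norm p (\<lambda>z. u z * f z) \<le> K * hardy_norm p f" .
qed

lemma bounded_mult_hardy:
  assumes p: "p > 0" and u: "u holomorphic_on ball 0 1" and K: "\<And>z. z \<in> ball 0 1 \<Longrightarrow> norm (u z) \<le> K"
  shows "bounded_mult_op (hardy p) (hardy_norm p) u"
  unfolding bounded_mult_op_def using mult_hardy[OF p u K] by blast


lemma periodic_integral:
  fixes q :: "real \<Rightarrow> real"
  assumes cq: "continuous_on UNIV q" and per: "\<And>t. q (t + 2*pi) = q t"
  shows "integral {0..2*pi} (\<lambda>t. q (t + \<alpha>)) = integral {0..2*pi} q"
proof -
  define N where "N = \<bar>\<alpha>\<bar> + 4*pi"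
  define \<Phi> where "\<Phi> x = integral {-N..x} q" for x
  define F where "F a = \<Phi> (a + 2*pi) - \<Phi> a" for a
  have intq: "q integrable_on {a..b}" for a b
    by (rule integrable_continuous_real) (rule continuous_on_subset[OF cq], auto)
  have F_eq: "integral {a..a+2*pi} q = F a" if "-N \<le> a" for a
    using Henstock_Kurzweil_Integration.integral_combine[where a="-N" and c=a and b="a+2*pi" and f=q, OF that _ intq] by (simp add: F_def \<Phi>_def)
  have der: "(\<Phi> has_real_derivative q x) (at x)" if "x \<in> {-N<..<N}" for x
  proof -
    have "continuous_on {-N..N} q" using continuous_on_subset[OF cq] by auto
    from integral_has_real_derivative[OF this, of x] that
    show ?thesis unfolding \<Phi>_def using at_within_Icc_at[of "-N" x N] by auto
  qed
  have F0: "(F has_real_derivative 0) (at a)" if "a \<in> {-N<..<N-2*pi}" for a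
  proof -
    have aa: "a + 2*pi \<in> {-N<..<N}" using that pi_gt_zero unfolding greaterThanLessThan_iff by linarith
    have aa2: "a \<in> {-N<..<N}" using that pi_gt_zero unfolding greaterThanLessThan_iff by linarith
    have d1: "((\<lambda>a. \<Phi> (a + 2*pi)) has_real_derivative q (a + 2*pi) * 1) (at a)"
      by (rule DERIV_chain2[where g="\<lambda>a. a + 2*pi", OF der[OF aa]]) (auto intro!: derivative_eq_intros)
    have "(F has_real_derivative q (a + 2*pi) * 1 - q a) (at a)"
      unfolding F_def by (intro DERIV_diff d1 der aa2)
    then show ?thesis using per by simp
  qed
  have Npos: "N - 2*pi > \<alpha>" "N - 2*pi > 0" "-N < \<alpha>" "-N < 0"
    unfolding N_def using pi_gt_zero by linarith+
  have "F \<alpha> = F 0"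
    by (rule DERIV_isconst3[of "-N" "N-2*pi"]) (use Npos F0 in auto)
  then have "integral {\<alpha>..\<alpha>+2*pi} q = integral {0..2*pi} q"
    using F_eq[of \<alpha>] F_eq[of 0] Npos by simp
  moreover have "integral {0..2*pi} (\<lambda>t. q (t + \<alpha>)) = integral {\<alpha>..\<alpha>+2*pi} q"
    using integral_shift_real_ivl[of \<alpha> \<alpha> "\<alpha>+2*pi" q] by simp
  ultimately show ?thesis by simp
qed

lemma cis_2pi: "cis (x + 2*pi) = cis x"
  by (simp add: complex_eq_iff)

lemma cont_on_ball_circle:
  assumes "continuous_on (ball 0 R) G" "R > 1"
  shows "continuous_on UNIV (\<lambda>t. G (cis t))"
  by (rule continuous_on_compose2[OF assms(1)]) (use assms(2) in \<open>auto intro!: continuous_intros\<close>)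

lemma FR2:
  fixes G :: "complex \<Rightarrow> complex"
  assumes hG: "G holomorphic_on ball 0 R" and R: "R > 1"
  shows "integral {-1..1} (\<lambda>x. norm (G (of_real x))^2) \<le> integral {0..2*pi} (\<lambda>t. norm (G (cis t))^2) / 2"
proof -
  define H where "H z = G z * cnj (G (cnj z))" for z
  have "cnj ` ball 0 R \<subseteq> ball 0 R" by auto
  then have "G holomorphic_on cnj ` ball 0 R" using hG holomorphic_on_subset by blast
  then have "cnj \<circ> G \<circ> cnj holomorphic_on ball 0 R" by (intro holomorphic_on_compose_cnj_cnj) auto
  then have hH: "H holomorphic_on ball 0 R"
    using hG unfolding H_def by (auto simp: o_def intro!: holomorphic_intros)
  define \<gamma>1 where "\<gamma>1 = linepath (-1::complex) 1"
  define \<gamma>2 where "\<gamma>2 = part_circlepath 0 1 0 pi"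
  have v1: "valid_path \<gamma>1" and v2: "valid_path \<gamma>2" by (auto simp: \<gamma>1_def \<gamma>2_def)
  have "closed_segment (-1::complex) 1 \<subseteq> cball 0 1"
    by (rule closed_segment_subset) auto
  then have p1: "path_image \<gamma>1 \<subseteq> ball 0 R" using R by (auto simp: \<gamma>1_def)
  have p2: "path_image \<gamma>2 \<subseteq> ball 0 R" using R by (auto simp: \<gamma>2_def path_image_part_circlepath')
  obtain I1 where I1: "(H has_contour_integral I1) \<gamma>1"
    using contour_integrable_holomorphic_simple[OF hH open_ball v1 p1] by (auto simp: contour_integrable_on_def)
  obtain I2 where I2: "(H has_contour_integral I2) \<gamma>2"
    using contour_integrable_holomorphic_simple[OF hH open_ball v2 p2] by (auto simp: contour_integrable_on_def)
  have j: "(H has_contour_integral (I1 + I2)) (\<gamma>1 +++ \<gamma>2)"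
    by (rule has_contour_integral_join[OF I1 I2 v1 v2])
  have fs: "pathfinish \<gamma>1 = pathstart \<gamma>2" "pathfinish \<gamma>2 = pathstart \<gamma>1"
    by (auto simp: \<gamma>1_def \<gamma>2_def)
  have "(H has_contour_integral 0) (\<gamma>1 +++ \<gamma>2)"
  proof (rule Cauchy_theorem_convex_simple[OF hH convex_ball])
    show "valid_path (\<gamma>1 +++ \<gamma>2)" using v1 v2 fs by simp
    show "path_image (\<gamma>1 +++ \<gamma>2) \<subseteq> ball 0 R"
      using path_image_join_subset[of \<gamma>1 \<gamma>2] p1 p2 by blast
    show "pathfinish (\<gamma>1 +++ \<gamma>2) = pathstart (\<gamma>1 +++ \<gamma>2)" using fs by simp
  qed
  then have sum0: "I1 + I2 = 0" using has_contour_integral_unique[OF j] by simp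
  define q where "q t = norm (G (cis t))^2" for t
  define q1 where "q1 x = norm (G (of_real x))^2" for x
  have cG: "continuous_on (ball 0 R) G" using hG holomorphic_on_imp_continuous_on by blast
  have cq: "continuous_on UNIV q" unfolding q_def
    by (intro continuous_intros cont_on_ball_circle[OF cG R])
  have cq1: "continuous_on {-1..1} q1" unfolding q1_def
    by (intro continuous_intros continuous_on_compose2[OF cG]) (use R in \<open>auto intro!: continuous_intros\<close>)
  have "((\<lambda>x. H (of_real x)) has_integral I1) {Re (-1)..Re 1}"
    using I1 unfolding \<gamma>1_def by (subst (asm) has_contour_integral_linepath_Reals_iff) auto
  moreover have "(\<lambda>x. H (of_real x)) = (\<lambda>x. of_real (q1 x))"
    unfolding H_def q1_def fun_eq_iff by (simp only: complex_cnj_complex_of_real complex_norm_square) simp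
  ultimately have "((\<lambda>x. of_real (q1 x)::complex) has_integral I1) {-1..1}" by simp
  moreover have "((\<lambda>x. of_real (q1 x)::complex) has_integral of_real (integral {-1..1} q1)) {-1..1}"
    by (intro has_integral_of_real integrable_integral integrable_continuous_real cq1)
  ultimately have I1eq: "I1 = of_real (integral {-1..1} q1)" using has_integral_unique by blast
  have "((\<lambda>t. H (0 + 1 * cis t) * 1 * \<i> * cis t) has_integral I2) {0..pi}"
    using I2 unfolding \<gamma>2_def by (subst (asm) has_contour_integral_part_circlepath_iff) auto
  then have I2eq: "I2 = integral {0..pi} (\<lambda>t. H (cis t) * \<i> * cis t)" and
    I2i: "(\<lambda>t. H (cis t) * \<i> * cis t) integrable_on {0..pi}"
    by (auto simp: integral_unique has_integral_integrable)
  have nH: "norm (H (cis t) * \<i> * cis t) \<le> (q t + q (-t)) / 2" for t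
  proof -
    have "norm (H (cis t) * \<i> * cis t) = norm (G (cis t)) * norm (G (cis (-t)))"
      by (simp add: H_def norm_mult cis_cnj)
    also have "\<dots> \<le> (q t + q (-t)) / 2" unfolding q_def
      using sum_squares_bound[of "norm (G (cis t))" "norm (G (cis (-t)))"] by (simp add: power2_eq_square)
    finally show ?thesis .
  qed
  have iq: "q integrable_on {a..b}" for a b
    by (rule integrable_continuous_real) (rule continuous_on_subset[OF cq], auto)
  have iqm: "(\<lambda>t. q (-t)) integrable_on {0..pi}"
    using iq[of "-pi" 0] Henstock_Kurzweil_Integration.integrable_reflect_real[where f=q and a="-pi" and b=0] by simp
  have iqs: "(\<lambda>t. (q t + q (-t)) / 2) integrable_on {0..pi}"
    using integrable_add[OF iq iqm] by (intro integrable_on_divide) auto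
  have "norm I2 \<le> integral {0..pi} (\<lambda>t. (q t + q (-t)) / 2)"
    unfolding I2eq by (rule integral_norm_bound_integral[OF I2i iqs nH])
  also have "\<dots> = (integral {0..pi} q + integral {0..pi} (\<lambda>t. q (-t))) / 2"
    using iq iqm by (simp add: integral_add integral_divide)
  also have "integral {0..pi} (\<lambda>t. q (-t)) = integral {-pi..0} q"
    using Henstock_Kurzweil_Integration.integral_reflect_real[where f=q and a="-pi" and b=0] by simp
  also have "\<dots> = integral {pi..2*pi} q"
  proof -
    have "integral {pi-2*pi..2*pi-2*pi} (\<lambda>x. q (x + 2*pi)) = integral {pi..2*pi} q"
      by (rule integral_shift_real_ivl)
    moreover have "q (x + 2*pi) = q x" for x unfolding q_def by (simp only: cis_2pi)
    ultimately show ?thesis by simp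
  qed
  also have "integral {0..pi} q + integral {pi..2*pi} q = integral {0..2*pi} q"
    by (rule Henstock_Kurzweil_Integration.integral_combine) (use iq in auto)
  finally have "norm I2 \<le> integral {0..2*pi} q / 2" .
  moreover have "integral {-1..1} q1 = - Re I2" using sum0 I1eq by (simp add: algebra_simps complex_eq_iff)
  moreover have "- Re I2 \<le> norm I2" using abs_Re_le_cmod[of I2] by linarith
  ultimately show ?thesis unfolding q_def q1_def by linarith
qed


lemma blaschke_ineq:
  fixes a z :: complex
  shows "(norm (1 - cnj a * z))^2 - (norm (z - a))^2 = (1 - (norm a)^2) * (1 - (norm z)^2)"
  by (simp only: cmod_power2) (simp add: algebra_simps power2_eq_square)

lemma blaschke_le:
  fixes a z :: complex
  assumes "norm a < 1" "norm z \<le> 1"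
  shows "norm (z - a) \<le> norm (1 - cnj a * z)"
proof -
  have "(1 - (norm a)^2) * (1 - (norm z)^2) \<ge> 0"
    using assms by (intro mult_nonneg_nonneg) (auto simp: power_le_one abs_square_le_1)
  then have "(norm (z - a))^2 \<le> (norm (1 - cnj a * z))^2" using blaschke_ineq[of a z] by linarith
  then show ?thesis using power2_le_imp_le by force
qed

lemma blaschke_eq:
  fixes a z :: complex
  assumes "norm z = 1"
  shows "norm (z - a) = norm (1 - cnj a * z)"
proof -
  have "(norm (z - a))^2 = (norm (1 - cnj a * z))^2" using blaschke_ineq[of a z] assms by simp
  then show ?thesis using power2_eq_imp_eq by force
qed

lemma div_full:
  fixes h :: "complex \<Rightarrow> complex"
  assumes hh: "h holomorphic_on S" and S: "open S" "connected S" and a: "a \<in> S" "h a = 0"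
    and nc: "\<exists>w\<in>S. h w \<noteq> 0"
  obtains q n where "q holomorphic_on S" "n > 0" "q a \<noteq> 0" "\<And>z. z \<in> S \<Longrightarrow> h z = (z - a)^n * q z"
proof -
  define n where "n = nat (zorder h a)"
  define g where "g = zor_poly h a"
  from zorder_exist_zero[OF hh S(1) S(2) a(1) nc] a(2)
  obtain r where zpos: "zorder h a > 0" and r: "r > 0" "cball a r \<subseteq> S" "g holomorphic_on cball a r"
     "\<And>w. w \<in> cball a r \<Longrightarrow> h w = g w * (w - a)^n \<and> g w \<noteq> 0"
    unfolding g_def n_def by auto
  have npos: "n > 0" using zpos by (simp add: n_def)
  define q where "q z = (if z = a then g a else h z / (z - a)^n)" for z
  have hol1: "q holomorphic_on (S - {a})"
  proof (rule holomorphic_transform[of "\<lambda>z. h z / (z - a)^n"])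
    show "(\<lambda>z. h z / (z - a)^n) holomorphic_on S - {a}"
      by (intro holomorphic_intros holomorphic_on_subset[OF hh]) auto
  qed (auto simp: q_def)
  have hol2: "q holomorphic_on ball a r"
  proof (rule holomorphic_transform[of g])
    show "g holomorphic_on ball a r" using r(3) holomorphic_on_subset by fastforce
    fix x assume x: "x \<in> ball a r"
    show "g x = q x"
    proof (cases "x = a")
      case False
      then have "(x - a)^n \<noteq> 0" by simp
      then show ?thesis using r(4)[of x] x False by (auto simp: q_def)
    qed (simp add: q_def)
  qed
  have "q holomorphic_on ((S - {a}) \<union> ball a r)"
    by (rule holomorphic_on_Un[OF hol1 hol2]) (use S in auto)
  moreover have "(S - {a}) \<union> ball a r = S" using r a by auto
  ultimately have hq: "q holomorphic_on S" by simp
  have qa: "q a \<noteq> 0" using r(4)[of a] r(1) by (simp add: q_def)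
  have eq: "h z = (z - a)^n * q z" if "z \<in> S" for z
    using a(2) npos by (cases "z = a") (auto simp: q_def)
  show ?thesis by (rule that[OF hq npos qa eq])
qed

lemma blaschke_factor_aux:
  fixes n :: nat
  shows "\<forall>(h::complex\<Rightarrow>complex) R. h holomorphic_on ball 0 R \<longrightarrow> R > 1 \<longrightarrow>
     (\<forall>z\<in>ball 0 R. norm z \<ge> 1 \<longrightarrow> h z \<noteq> 0) \<longrightarrow> finite {z\<in>ball 0 R. h z = 0} \<longrightarrow>
     card {z\<in>ball 0 R. h z = 0} = n \<longrightarrow>
     (\<exists>F R'. R' > 1 \<and> F holomorphic_on ball 0 R' \<and> (\<forall>z\<in>ball 0 R'. F z \<noteq> 0) \<and>
        (\<forall>z. norm z = 1 \<longrightarrow> norm (F z) = norm (h z)) \<and> (\<forall>z. norm z \<le> 1 \<longrightarrow> norm (h z) \<le> norm (F z)))"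
proof (induction n rule: less_induct)
  case (less n)
  show ?case
  proof (intro allI impI)
    fix h :: "complex \<Rightarrow> complex" and R :: real
    assume hh: "h holomorphic_on ball 0 R" and R: "R > 1"
      and nz: "\<forall>z\<in>ball 0 R. norm z \<ge> 1 \<longrightarrow> h z \<noteq> 0" and fin: "finite {z\<in>ball 0 R. h z = 0}"
      and cn: "card {z\<in>ball 0 R. h z = 0} = n"
    define Z where "Z = {z\<in>ball 0 R. h z = 0}"
    show "\<exists>F R'. R' > 1 \<and> F holomorphic_on ball 0 R' \<and> (\<forall>z\<in>ball 0 R'. F z \<noteq> 0) \<and>
        (\<forall>z. norm z = 1 \<longrightarrow> norm (F z) = norm (h z)) \<and> (\<forall>z. norm z \<le> 1 \<longrightarrow> norm (h z) \<le> norm (F z))"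
    proof (cases "Z = {}")
      case True
      then have "\<forall>z\<in>ball 0 R. h z \<noteq> 0" by (auto simp: Z_def)
      then show ?thesis using hh R by blast
    next
      case False
      then obtain a where aZ: "a \<in> Z" by blast
      then have a: "a \<in> ball 0 R" "h a = 0" by (auto simp: Z_def)
      then have na: "norm a < 1" using nz by force
      have "(1::complex) \<in> ball 0 R" using R by simp
      moreover have "h 1 \<noteq> 0" using nz \<open>(1::complex) \<in> ball 0 R\<close> by simp
      ultimately have ncst: "\<exists>w\<in>ball 0 R. h w \<noteq> 0" by blast
      obtain q m where hq: "q holomorphic_on ball 0 R" and m: "m > 0" and qa: "q a \<noteq> 0"
        and heq: "\<And>z. z \<in> ball 0 R \<Longrightarrow> h z = (z - a)^m * q z"
        using div_full[OF hh open_ball connected_ball a ncst] by blast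
      define R1 where "R1 = min R (2 / (1 + norm a))"
      have pos: "0 < 1 + norm a" by (simp add: add_pos_nonneg)
      have "1 < 2 / (1 + norm a)" by (subst less_divide_eq_1_pos[OF pos]) (use na in linarith)
      then have R1: "R1 > 1" "R1 \<le> R" using R by (auto simp: R1_def)
      have fac: "1 - cnj a * z \<noteq> 0" if "z \<in> ball 0 R1" for z
      proof -
        have "norm z < 2 / (1 + norm a)" using that by (simp add: R1_def)
        then have "norm a * norm z \<le> norm a * (2 / (1 + norm a))"
          by (intro mult_left_mono) auto
        also have "\<dots> < 1" by (subst times_divide_eq_right, subst divide_less_eq_1_pos[OF pos]) (use na in linarith)
        finally have "norm (cnj a * z) < 1" by (simp add: norm_mult)
        then show ?thesis by auto
      qed
      define h1 where "h1 z = q z * (1 - cnj a * z)^m" for z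
      have hh1: "h1 holomorphic_on ball 0 R1" unfolding h1_def
        using hq R1 by (intro holomorphic_intros) (auto intro: holomorphic_on_subset)
      have sub: "{z\<in>ball 0 R1. h1 z = 0} \<subseteq> Z - {a}"
      proof
        fix z assume z: "z \<in> {z\<in>ball 0 R1. h1 z = 0}"
        then have zR: "z \<in> ball 0 R" using R1 by auto
        have "q z = 0" using z fac[of z] by (auto simp: h1_def)
        then show "z \<in> Z - {a}" using qa heq[OF zR] zR by (auto simp: Z_def)
      qed
      have fin1: "finite {z\<in>ball 0 R1. h1 z = 0}"
        using finite_subset[OF sub] fin by (auto simp: Z_def)
      have "card {z\<in>ball 0 R1. h1 z = 0} \<le> card (Z - {a})"
        using card_mono[OF _ sub] fin by (auto simp: Z_def)
      also have "\<dots> < card Z" using fin aZ unfolding Z_def[symmetric] by (intro card_Diff1_less) (auto simp: Z_def)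
      finally have lt: "card {z\<in>ball 0 R1. h1 z = 0} < n" using cn by (simp add: Z_def)
      have nz1: "\<forall>z\<in>ball 0 R1. norm z \<ge> 1 \<longrightarrow> h1 z \<noteq> 0"
      proof (intro ballI impI)
        fix z :: complex assume z: "z \<in> ball 0 R1" "norm z \<ge> 1"
        then have zR: "z \<in> ball 0 R" using R1 by auto
        then have "h z \<noteq> 0" using nz z by auto
        then have "q z \<noteq> 0" using heq[OF zR] by auto
        then show "h1 z \<noteq> 0" using fac[OF z(1)] by (simp add: h1_def)
      qed
      from less.IH[OF lt, rule_format, OF hh1 R1(1) nz1[rule_format] fin1 refl]
      obtain F R' where F: "R' > 1" "F holomorphic_on ball 0 R'" "\<forall>z\<in>ball 0 R'. F z \<noteq> 0"
        "\<forall>z. norm z = 1 \<longrightarrow> norm (F z) = norm (h1 z)" "\<forall>z. norm z \<le> 1 \<longrightarrow> norm (h1 z) \<le> norm (F z)"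
        by blast
      have e1: "norm (h z) = norm (F z)" if "norm z = 1" for z
      proof -
        have zR: "z \<in> ball 0 R" using that R by simp
        have "norm (h z) = norm (z - a)^m * norm (q z)" using heq[OF zR] by (simp add: norm_mult norm_power)
        also have "\<dots> = norm (1 - cnj a * z)^m * norm (q z)" using blaschke_eq[OF that, of a] by simp
        also have "\<dots> = norm (h1 z)" by (simp add: h1_def norm_mult norm_power)
        finally show ?thesis using F(4) that by simp
      qed
      have e2: "norm (h z) \<le> norm (F z)" if "norm z \<le> 1" for z
      proof -
        have zR: "z \<in> ball 0 R" using that R by simp
        have "norm (h z) = norm (z - a)^m * norm (q z)" using heq[OF zR] by (simp add: norm_mult norm_power)
        also have "\<dots> \<le> norm (1 - cnj a * z)^m * norm (q z)"
          using blaschke_le[OF na that] by (intro mult_right_mono power_mono) auto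
        also have "\<dots> = norm (h1 z)" by (simp add: h1_def norm_mult norm_power)
        finally show ?thesis using F(5) that using order_trans by blast
      qed
      show ?thesis using F(1-3) e1 e2 by metis
    qed
  qed
qed

lemma blaschke_factor:
  fixes h :: "complex \<Rightarrow> complex"
  assumes "h holomorphic_on ball 0 R" "R > 1" "\<And>z. z \<in> ball 0 R \<Longrightarrow> norm z \<ge> 1 \<Longrightarrow> h z \<noteq> 0"
    "finite {z\<in>ball 0 R. h z = 0}"
  obtains F R' where "R' > 1" "F holomorphic_on ball 0 R'" "\<And>z. z\<in>ball 0 R' \<Longrightarrow> F z \<noteq> 0"
    "\<And>z. norm z = 1 \<Longrightarrow> norm (F z) = norm (h z)" "\<And>z. norm z \<le> 1 \<Longrightarrow> norm (h z) \<le> norm (F z)"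
  using blaschke_factor_aux[rule_format, OF assms(1,2) _ assms(4) refl] assms(3) by blast


lemma annulus_free:
  fixes h :: "complex \<Rightarrow> complex"
  assumes hh: "h holomorphic_on ball 0 R" and R: "R > 1" and nz: "\<And>z. norm z = 1 \<Longrightarrow> h z \<noteq> 0"
  obtains R2 where "1 < R2" "R2 \<le> R" "\<And>z. 1 \<le> norm z \<Longrightarrow> norm z < R2 \<Longrightarrow> h z \<noteq> 0"
proof (cases "h constant_on ball 0 R")
  case True
  then obtain c where c: "\<And>z. z \<in> ball 0 R \<Longrightarrow> h z = c" by (auto simp: constant_on_def)
  have "h 1 \<noteq> 0" using nz by simp
  moreover have "h 1 = c" using c R by simp
  ultimately have "\<And>z. 1 \<le> norm z \<Longrightarrow> norm z < R \<Longrightarrow> h z \<noteq> 0" using c by simp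
  then show ?thesis using that R by blast
next
  case False
  define R0 where "R0 = (1 + R) / 2"
  have R0: "1 < R0" "R0 < R" using R by (auto simp: R0_def)
  have "finite {z\<in>cball 0 R0. h z = 0}"
    by (rule holomorphic_compact_finite_zeros[OF hh open_ball connected_ball compact_cball _ False])
       (use R0 in auto)
  then have finA: "finite {z\<in>cball 0 R0. h z = 0 \<and> 1 \<le> norm z}" by (rule rev_finite_subset) auto
  define A where "A = {z\<in>cball 0 R0. h z = 0 \<and> 1 \<le> norm z}"
  define R2 where "R2 = Min (insert R0 (norm ` A))"
  have fin2: "finite (insert R0 (norm ` A))" using finA by (simp add: A_def)
  have all: "\<forall>y\<in>insert R0 (norm ` A). 1 < y"
  proof
    fix y assume y: "y \<in> insert R0 (norm ` A)"
    show "1 < y"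
    proof (cases "y = R0")
      case False
      then obtain z where z: "z \<in> A" "y = norm z" using y by blast
      then have "norm z \<ge> 1" "h z = 0" by (auto simp: A_def)
      moreover have "norm z \<noteq> 1" using nz \<open>h z = 0\<close> by blast
      ultimately show "1 < y" using z by simp
    qed (use R0 in simp)
  qed
  have "1 < R2" unfolding R2_def using Min_gr_iff[OF fin2] all by blast
  moreover have "R2 \<le> R0" unfolding R2_def using fin2 by (intro Min_le) auto
  moreover have "h z \<noteq> 0" if "1 \<le> norm z" "norm z < R2" for z
  proof
    assume "h z = 0"
    moreover have "norm z \<le> R0" using that \<open>R2 \<le> R0\<close> by simp
    ultimately have "z \<in> A" using that by (auto simp: A_def)
    then have "R2 \<le> norm z" unfolding R2_def using fin2 by (intro Min_le) auto
    then show False using that by simp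
  qed
  ultimately show ?thesis using that R0 by force
qed

lemma FR0:
  fixes h :: "complex \<Rightarrow> complex"
  assumes hh: "h holomorphic_on ball 0 R" and R: "R > 1" and nz: "\<And>z. norm z = 1 \<Longrightarrow> h z \<noteq> 0"
  shows "integral {-1..1} (\<lambda>x. norm (h (of_real x))) \<le> integral {0..2*pi} (\<lambda>t. norm (h (cis t))) / 2"
proof -
  obtain R2 where R2: "1 < R2" "R2 \<le> R" and nz2: "\<And>z. 1 \<le> norm z \<Longrightarrow> norm z < R2 \<Longrightarrow> h z \<noteq> 0"
    using annulus_free[OF hh R nz] by blast
  have hh2: "h holomorphic_on ball 0 R2" using hh R2 by (auto intro: holomorphic_on_subset)
  have sub: "{z\<in>ball 0 R2. h z = 0} \<subseteq> {z\<in>cball 0 1. h z = 0}" using nz2 by force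
  have fin: "finite {z\<in>ball 0 R2. h z = 0}"
  proof (cases "h constant_on ball 0 R2")
    case True
    then obtain c where c: "\<And>z. z \<in> ball 0 R2 \<Longrightarrow> h z = c" by (auto simp: constant_on_def)
    have "h 1 \<noteq> 0" using nz by simp
    moreover have "h 1 = c" using c R2 by simp
    ultimately have "{z\<in>ball 0 R2. h z = 0} = {}" using c by auto
    then show ?thesis by (metis finite.emptyI)
  next
    case False
    have "finite {z\<in>cball 0 1. h z = 0}"
      by (rule holomorphic_compact_finite_zeros[OF hh2 open_ball connected_ball compact_cball _ False])
         (use R2 in auto)
    then show ?thesis using sub finite_subset by blast
  qed
  obtain F R' where R': "R' > 1" and hF: "F holomorphic_on ball 0 R'" and Fnz: "\<And>z. z\<in>ball 0 R' \<Longrightarrow> F z \<noteq> 0"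
    and Feq: "\<And>z. norm z = 1 \<Longrightarrow> norm (F z) = norm (h z)" and Fle: "\<And>z. norm z \<le> 1 \<Longrightarrow> norm (h z) \<le> norm (F z)"
    using blaschke_factor[OF hh2 R2(1) _ fin] nz2 by (metis mem_ball_0)
  obtain G where hG: "G holomorphic_on ball 0 R'" and FG: "\<And>z. z \<in> ball 0 R' \<Longrightarrow> F z = G z ^ 2"
    using contractible_imp_holomorphic_sqrt[OF hF convex_imp_contractible[OF convex_ball] Fnz] by blast
  have cG: "continuous_on (ball 0 R') G" using hG holomorphic_on_imp_continuous_on by blast
  have ch: "continuous_on (ball 0 R) h" using hh holomorphic_on_imp_continuous_on by blast
  have i1: "(\<lambda>x. norm (h (of_real x))) integrable_on {-1..1}"
    by (intro integrable_continuous_real continuous_intros continuous_on_compose2[OF ch]) (use R in \<open>auto intro!: continuous_intros\<close>)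
  have i2: "(\<lambda>x. norm (G (of_real x))^2) integrable_on {-1..1}"
    by (intro integrable_continuous_real continuous_intros continuous_on_compose2[OF cG]) (use R' in \<open>auto intro!: continuous_intros\<close>)
  have "integral {-1..1} (\<lambda>x. norm (h (of_real x))) \<le> integral {-1..1} (\<lambda>x. norm (G (of_real x))^2)"
  proof (rule integral_le[OF i1 i2])
    fix x :: real assume x: "x \<in> {-1..1}"
    then have "norm (of_real x :: complex) \<le> 1" by auto
    moreover then have "(of_real x :: complex) \<in> ball 0 R'" using R' by simp
    ultimately show "norm (h (of_real x)) \<le> norm (G (of_real x))^2"
      using Fle FG by (metis norm_power)
  qed
  also have "\<dots> \<le> integral {0..2*pi} (\<lambda>t. norm (G (cis t))^2) / 2" by (rule FR2[OF hG R'])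
  also have "integral {0..2*pi} (\<lambda>t. norm (G (cis t))^2) = integral {0..2*pi} (\<lambda>t. norm (h (cis t)))"
  proof (rule integral_cong)
    fix t :: real
    have "cis t \<in> ball 0 R'" using R' by simp
    then show "norm (G (cis t))^2 = norm (h (cis t))" using Feq[of "cis t"] FG by (simp add: norm_power)
  qed
  finally show ?thesis .
qed


lemma image_div_Icc:
  fixes s :: real assumes "s > 0" "0 \<le> \<rho>"
  shows "(\<lambda>x. x / s) ` {0..\<rho>} = {0..\<rho>/s}"
proof
  show "(\<lambda>x. x / s) ` {0..\<rho>} \<subseteq> {0..\<rho>/s}" using assms by (auto simp: divide_right_mono)
  show "{0..\<rho>/s} \<subseteq> (\<lambda>x. x / s) ` {0..\<rho>}"
  proof
    fix y assume y: "y \<in> {0..\<rho>/s}"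
    have "y * s \<in> {0..\<rho>}" using y assms by (auto simp: field_simps)
    moreover have "y = (y * s) / s" using assms by simp
    ultimately show "y \<in> (\<lambda>x. x / s) ` {0..\<rho>}" by blast
  qed
qed

lemma CORE:
  fixes g :: "complex \<Rightarrow> complex"
  assumes hg: "g holomorphic_on ball 0 1" and M: "\<And>r. r \<in> {0<..<1} \<Longrightarrow> cm 1 g r \<le> M"
    and w: "norm w = 1" and \<rho>: "0 \<le> \<rho>" "\<rho> < 1"
  shows "integral {0..\<rho>} (\<lambda>t. norm (g (of_real t * w))) \<le> pi * M"
proof (cases "\<forall>z\<in>ball 0 1. g z = 0")
  case True
  have M0: "M \<ge> 0" using M[of "1/2"] cm_nonneg[of 1 g "1/2"] by simp
  have "integral {0..\<rho>} (\<lambda>t. norm (g (of_real t * w))) = integral {0..\<rho>} (\<lambda>t. 0::real)"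
    by (rule integral_cong) (use True \<rho> w in \<open>auto simp: norm_mult\<close>)
  then show ?thesis using M0 by simp
next
  case False
  then obtain z0 where z0: "z0 \<in> ball 0 1" "g z0 \<noteq> 0" by blast
  have cg: "continuous_on (ball 0 1) g" using hg holomorphic_on_imp_continuous_on by blast
  define s' where "s' = (1 + \<rho>) / 2"
  have s': "\<rho> < s'" "s' < 1" using \<rho> by (auto simp: s'_def)
  have finZ: "finite {z\<in>cball 0 s'. g z = 0}"
  proof (cases "g constant_on ball 0 1")
    case True
    then obtain c where c: "\<And>z. z \<in> ball 0 1 \<Longrightarrow> g z = c" by (auto simp: constant_on_def)
    then have "c \<noteq> 0" using z0 by auto
    then have "{z\<in>cball 0 s'. g z = 0} = {}" using c s' by auto
    then show ?thesis by (metis finite.emptyI)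
  next
    case False
    show ?thesis
      by (rule holomorphic_compact_finite_zeros[OF hg open_ball connected_ball compact_cball _ False])
         (use s' in auto)
  qed
  have inf: "infinite ({\<rho><..<s'} - norm ` {z\<in>cball 0 s'. g z = 0})"
    by (rule Diff_infinite_finite) (use finZ s' in auto)
  then obtain s where s: "\<rho> < s" "s < s'" and snz: "s \<notin> norm ` {z\<in>cball 0 s'. g z = 0}"
  proof -
    from infinite_imp_nonempty[OF inf] obtain s where "s \<in> {\<rho><..<s'} - norm ` {z\<in>cball 0 s'. g z = 0}" by blast
    then show ?thesis using that by auto
  qed
  have s0: "s > 0" "s < 1" using s \<rho> s' by auto
  have gnz: "g z \<noteq> 0" if "norm z = s" for z using snz that s by auto
  define h where "h u = g (of_real s * w * u)" for u
  have R: "1 / s > 1" using s0 by (simp add: field_simps)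
  have hh: "h holomorphic_on ball 0 (1/s)"
  proof -
    have "(\<lambda>u. of_real s * w * u) ` ball 0 (1/s) \<subseteq> ball 0 1"
      using s0 w by (auto simp: norm_mult field_simps)
    then show ?thesis unfolding h_def
      by (intro holomorphic_on_compose_gen[OF _ hg, unfolded o_def]) (auto intro!: holomorphic_intros)
  qed
  have hnz: "h u \<noteq> 0" if "norm u = 1" for u
    using gnz[of "of_real s * w * u"] that w s0 by (simp add: h_def norm_mult)
  have fr: "integral {-1..1} (\<lambda>x. norm (h (of_real x))) \<le> integral {0..2*pi} (\<lambda>t. norm (h (cis t))) / 2"
    by (rule FR0[OF hh R hnz])
  define q where "q t = norm (g (of_real s * cis t))" for t
  have cq: "continuous_on UNIV q" unfolding q_def
    by (intro continuous_intros continuous_on_compose2[OF cg]) (use s0 in \<open>auto simp: norm_mult intro!: continuous_intros\<close>)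
  have qper: "q (t + 2*pi) = q t" for t unfolding q_def by (simp only: cis_2pi)
  have "w \<noteq> 0" using w by auto
  then have wc: "w = cis (Arg w)" using w cis_Arg[of w] by (auto simp: sgn_div_norm)
  have "integral {0..2*pi} (\<lambda>t. norm (h (cis t))) = integral {0..2*pi} (\<lambda>t. q (t + Arg w))"
  proof (rule integral_cong)
    fix t
    have "w * cis t = cis (t + Arg w)" by (subst wc) (simp add: cis_mult add.commute)
    then show "norm (h (cis t)) = q (t + Arg w)" by (simp add: h_def q_def mult.assoc)
  qed
  also have "\<dots> = integral {0..2*pi} q" by (rule periodic_integral[OF cq qper])
  also have "\<dots> = 2 * pi * cm 1 g s" unfolding cm_def q_def by simp
  also have "\<dots> \<le> 2 * pi * M" using M[of s] s0 by simp
  finally have frr: "integral {-1..1} (\<lambda>x. norm (h (of_real x))) \<le> pi * M" using fr by simp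
  have ch: "continuous_on (ball 0 (1/s)) h" using hh holomorphic_on_imp_continuous_on by blast
  have ih: "(\<lambda>x. norm (h (of_real x))) integrable_on {a..b}" if "-1 \<le> a" "b \<le> 1" for a b
    by (intro integrable_continuous_real continuous_intros continuous_on_compose2[OF ch])
       (use that R in \<open>auto intro!: continuous_intros\<close>)
  have "\<rho> / s \<le> 1" using s s0 by simp
  have "integral {0..\<rho>} (\<lambda>t. norm (g (of_real t * w))) = s * integral {0..\<rho>/s} (\<lambda>x. norm (h (of_real x)))"
  proof -
    have "integral ((\<lambda>x. x / s) ` {0..\<rho>}) (\<lambda>x. norm (g (of_real (s * x) * w))) = (1 / \<bar>s\<bar>) *\<^sub>R integral {0..\<rho>} (\<lambda>t. norm (g (of_real t * w)))"
      by (rule integral_stretch_real[where f="\<lambda>t. norm (g (of_real t * w))"]) (use s0 in auto)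
    moreover have "(\<lambda>x. norm (g (of_real (s * x) * w))) = (\<lambda>x. norm (h (of_real x)))"
      by (auto simp: h_def fun_eq_iff mult.commute mult.left_commute)
    ultimately show ?thesis using s0 image_div_Icc[OF s0(1) \<rho>(1)] by (simp add: field_simps)
  qed
  also have "\<dots> \<le> 1 * integral {0..\<rho>/s} (\<lambda>x. norm (h (of_real x)))"
    using s0 by (intro mult_right_mono integral_nonneg ih) (use \<open>\<rho>/s \<le> 1\<close> in auto)
  also have "\<dots> \<le> integral {-1..1} (\<lambda>x. norm (h (of_real x)))"
    using \<open>\<rho>/s \<le> 1\<close> s0 \<rho> by (simp, intro integral_subset_le ih) auto
  finally show ?thesis using frr by simp
qed


lemma powr_aux:
  fixes x t p :: real
  assumes "x \<ge> 0" "t > 0" "p \<ge> 1"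
  shows "x \<le> t powr (1 - p) * x powr p + t"
proof (cases "x \<le> t")
  case True then show ?thesis using assms by (smt (verit) mult_nonneg_nonneg powr_ge_zero)
next
  case False
  then have xt: "x > t" by simp
  have "t powr (p - 1) \<le> x powr (p - 1)" using xt assms by (intro powr_mono2) auto
  then have "x * t powr (p - 1) \<le> x * x powr (p - 1)" using assms by (intro mult_left_mono) auto
  also have "x * x powr (p - 1) = x powr p" using xt assms by (simp add: powr_mult_base)
  finally have "t powr (1 - p) * (x * t powr (p - 1)) \<le> t powr (1 - p) * x powr p"
    by (intro mult_left_mono) auto
  moreover have "t powr (1 - p) * (x * t powr (p - 1)) = x"
    using assms by (simp add: powr_add[symmetric] mult.left_commute)
  ultimately show ?thesis using assms by linarith
qed

lemma cm_mono_gen: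
  assumes f: "continuous_on (ball 0 1) f" and g1: "continuous_on (ball 0 1) g1"
    and r: "0 \<le> r" "r < 1" and p: "p > 0" "p' > 0"
    and le: "\<And>z. z \<in> ball 0 1 \<Longrightarrow> norm (f z) powr p' \<le> a * norm (g1 z) powr p + c"
  shows "cm p' f r \<le> a * cm p g1 r + c"
proof -
  let ?F = "\<lambda>h q \<theta>. norm (h (complex_of_real r * cis \<theta>)) powr q"
  have i1: "?F f p' integrable_on {0..2*pi}" "?F g1 p integrable_on {0..2*pi}"
    using integrable_continuous_real[OF cont_circ[OF _ r]] f g1 p by auto
  have inb: "complex_of_real r * cis \<theta> \<in> ball 0 1" for \<theta> using r by (simp add: norm_mult)
  have i2: "(\<lambda>\<theta>. a * ?F g1 p \<theta>) integrable_on {0..2*pi}"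
    using integrable_on_cmult_left[OF i1(2)] by auto
  have i4: "(\<lambda>\<theta>. a * ?F g1 p \<theta> + c) integrable_on {0..2*pi}"
    using integrable_add[OF i2 integrable_const_ivl[of c 0 "2*pi"]] by simp
  have "integral {0..2*pi} (?F f p') \<le> integral {0..2*pi} (\<lambda>\<theta>. a * ?F g1 p \<theta> + c)"
    using i1 i4 le[OF inb] by (intro integral_le) auto
  also have "\<dots> = a * integral {0..2*pi} (?F g1 p) + c * (2*pi)"
    by (simp only: integral_add[OF i2 integrable_const_ivl] integral_mult_right)
       (simp add: mult.commute)
  finally show ?thesis unfolding cm_def by (simp add: field_simps)
qed

lemma cm1_le:
  assumes p: "p \<ge> 1" and g: "g \<in> hardy p" and r: "r \<in> {0<..<1}"
  shows "cm 1 g r \<le> 2 * hardy_norm p g"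
proof (rule field_le_epsilon)
  fix e :: real assume e: "e > 0"
  have p0: "p > 0" using p by simp
  define N where "N = hardy_norm p g"
  have N0: "N \<ge> 0" by (simp add: N_def hardy_norm_hs)
  define t where "t = N + e / 2"
  have t: "t > 0" using N0 e by (simp add: t_def)
  have hg: "g holomorphic_on ball 0 1" using g by (simp add: hardy_def)
  have cg: "continuous_on (ball 0 1) g" using hg holomorphic_on_imp_continuous_on by blast
  have "cm 1 g r \<le> t powr (1 - p) * cm p g r + t"
    by (rule cm_mono_gen[OF cg cg _ _ p0]) (use r p t in \<open>auto intro: powr_aux\<close>)
  also have "\<dots> \<le> t powr (1 - p) * hs p g + t"
    using cm_le_hs[OF g p0 r] by (simp add: mult_left_mono)
  also have "hs p g = N powr p"
    using hs_nonneg[of p g] p0 by (simp add: N_def hardy_norm_hs powr_powr)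
  also have "t powr (1 - p) * N powr p \<le> t powr (1 - p) * t powr p"
    using N0 t p0 e by (intro mult_left_mono powr_mono2) (auto simp: t_def)
  also have "t powr (1 - p) * t powr p = t" using t by (simp add: powr_add[symmetric])
  finally show "cm 1 g r \<le> 2 * hardy_norm p g + e" by (simp add: t_def N_def)
qed

lemma ray_ftc:
  assumes hF: "F holomorphic_on ball 0 1" and w: "norm w = 1" and \<rho>: "0 \<le> \<rho>" "\<rho> < 1"
  shows "((\<lambda>t. w * deriv F (of_real t * w)) has_integral (F (of_real \<rho> * w) - F 0)) {0..\<rho>}"
proof -
  have "((\<lambda>t. F (of_real t * w)) has_vector_derivative (w * deriv F (of_real x * w))) (at x within {0..\<rho>})"
    if x: "x \<in> {0..\<rho>}" for x
  proof -
    have xb: "of_real x * w \<in> ball 0 1" using x \<rho> w by (auto simp: norm_mult)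
    have "(F has_field_derivative deriv F (of_real x * w)) (at (of_real x * w))"
      using hF xb by (intro holomorphic_derivI[OF hF open_ball]) auto
    moreover have "((\<lambda>t. of_real t * w) has_vector_derivative w) (at x)"
      by (rule has_vector_derivative_real_field) (auto intro!: derivative_eq_intros)
    ultimately have "((F \<circ> (\<lambda>t. of_real t * w)) has_vector_derivative (w * deriv F (of_real x * w))) (at x)"
      using field_vector_diff_chain_at by blast
    then show ?thesis by (auto simp: o_def intro: has_vector_derivative_at_within)
  qed
  from fundamental_theorem_of_calculus[OF \<rho>(1) this] show ?thesis by simp
qed

lemma S2p_holo:
  assumes "f \<in> S2p p"
  shows "f holomorphic_on ball 0 1" "deriv f holomorphic_on ball 0 1"
    "deriv (deriv f) holomorphic_on ball 0 1" "deriv (deriv f) \<in> hardy p"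
  using assms by (auto simp: S2p_def intro!: holomorphic_deriv)

lemma ray_bound:
  assumes hF: "F holomorphic_on ball 0 1" and w: "norm w = 1" and \<rho>: "0 \<le> \<rho>" "\<rho> < 1"
  shows "norm (F (of_real \<rho> * w) - F 0) \<le> integral {0..\<rho>} (\<lambda>t. norm (deriv F (of_real t * w)))"
proof -
  have hF': "deriv F holomorphic_on ball 0 1" using hF by (auto intro!: holomorphic_deriv)
  then have c: "continuous_on (ball 0 1) (deriv F)" using holomorphic_on_imp_continuous_on by blast
  have i: "(\<lambda>t. norm (deriv F (of_real t * w))) integrable_on {0..\<rho>}"
    by (intro integrable_continuous_real continuous_intros continuous_on_compose2[OF c])
       (use \<rho> w in \<open>auto simp: norm_mult intro!: continuous_intros\<close>)
  have h: "((\<lambda>t. w * deriv F (of_real t * w)) has_integral (F (of_real \<rho> * w) - F 0)) {0..\<rho>}"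
    by (rule ray_ftc[OF hF w \<rho>])
  have "norm (integral {0..\<rho>} (\<lambda>t. w * deriv F (of_real t * w))) \<le> integral {0..\<rho>} (\<lambda>t. norm (deriv F (of_real t * w)))"
    by (rule integral_norm_bound_integral[OF has_integral_integrable[OF h] i]) (simp add: norm_mult w)
  then show ?thesis using integral_unique[OF h] by simp
qed

lemma deriv_bound:
  assumes p: "p \<ge> 1" and f: "f \<in> S2p p" and z: "z \<in> ball 0 1"
  shows "norm (deriv f z) \<le> norm (deriv f 0) + 2 * pi * hardy_norm p (deriv (deriv f))"
proof -
  note h = S2p_holo[OF f]
  have hn0: "hardy_norm p (deriv (deriv f)) \<ge> 0" by (simp add: hardy_norm_hs)
  show ?thesis
  proof (cases "z = 0")
    case True then show ?thesis using hn0 by simp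
  next
    case False
    define w where "w = z / of_real (norm z)"
    have w: "norm w = 1" using False by (simp add: w_def norm_divide)
    have zw: "z = of_real (norm z) * w" using False by (simp add: w_def)
    have "norm (deriv f z - deriv f 0) \<le> integral {0..norm z} (\<lambda>t. norm (deriv (deriv f) (of_real t * w)))"
      using ray_bound[OF h(2) w, of "norm z"] z zw by simp
    also have "\<dots> \<le> pi * (2 * hardy_norm p (deriv (deriv f)))"
      by (rule CORE[OF h(3) _ w]) (use cm1_le[OF p h(4)] z in auto)
    finally show ?thesis using norm_triangle_ineq2[of "deriv f z" "deriv f 0"] by simp
  qed
qed

lemma f_bound:
  assumes p: "p \<ge> 1" and f: "f \<in> S2p p" and z: "z \<in> ball 0 1"
  shows "norm (f z) \<le> norm (f 0) + norm (deriv f 0) + 2 * pi * hardy_norm p (deriv (deriv f))"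
proof -
  note h = S2p_holo[OF f]
  have "norm (f z - f 0) \<le> (norm (deriv f 0) + 2 * pi * hardy_norm p (deriv (deriv f))) * norm (z - 0)"
  proof (rule field_differentiable_bound[OF convex_ball])
    fix u assume u: "u \<in> ball (0::complex) 1"
    show "(f has_field_derivative deriv f u) (at u within ball 0 1)"
      using holomorphic_derivI[OF h(1) open_ball u] .
    show "norm (deriv f u) \<le> norm (deriv f 0) + 2 * pi * hardy_norm p (deriv (deriv f))"
      by (rule deriv_bound[OF p f u])
  qed (use z in auto)
  also have "\<dots> \<le> (norm (deriv f 0) + 2 * pi * hardy_norm p (deriv (deriv f))) * 1"
    using z by (intro mult_left_mono) (auto simp: hardy_norm_hs)
  finally show ?thesis using norm_triangle_ineq2[of "f z" "f 0"] by simp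
qed

lemma S2p_sup_bounds:
  assumes p: "p \<ge> 1" and f: "f \<in> S2p p" and z: "z \<in> ball 0 1"
  shows "norm (f z) \<le> 2 * pi * S2p_norm p f" "norm (deriv f z) \<le> 2 * pi * S2p_norm p f"
proof -
  have hn0: "hardy_norm p (deriv (deriv f)) \<ge> 0" by (simp add: hardy_norm_hs)
  have pi1: "1 \<le> 2 * pi" using pi_gt3 by simp
  have "norm (f 0) + norm (deriv f 0) + 2 * pi * hardy_norm p (deriv (deriv f)) \<le> 2 * pi * S2p_norm p f"
  proof -
    have "norm (f 0) \<le> 2 * pi * norm (f 0)" "norm (deriv f 0) \<le> 2 * pi * norm (deriv f 0)"
      using pi1 mult_right_mono[OF pi1, of "norm (f 0)"] mult_right_mono[OF pi1, of "norm (deriv f 0)"] by auto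
    then show ?thesis unfolding S2p_norm_def by (simp add: algebra_simps)
  qed
  then show "norm (f z) \<le> 2 * pi * S2p_norm p f" using f_bound[OF p f z] by simp
  have "norm (deriv f 0) \<le> 2 * pi * norm (deriv f 0)" "0 \<le> 2 * pi * norm (f 0)"
    using mult_right_mono[OF pi1, of "norm (deriv f 0)"] by auto
  then show "norm (deriv f z) \<le> 2 * pi * S2p_norm p f"
    using deriv_bound[OF p f z] unfolding S2p_norm_def ring_distribs by linarith
qed


lemma deriv_mult_ball:
  assumes u: "u holomorphic_on ball 0 1" and v: "v holomorphic_on ball 0 1" and z: "z \<in> ball 0 1"
  shows "deriv (\<lambda>z. u z * v z) z = deriv u z * v z + u z * deriv v z"
proof -
  have "((\<lambda>z. u z * v z) has_field_derivative (deriv u z * v z + u z * deriv v z)) (at z)"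
    using holomorphic_derivI[OF u open_ball z] holomorphic_derivI[OF v open_ball z]
    by (auto intro!: derivative_eq_intros simp: algebra_simps)
  then show ?thesis by (rule DERIV_imp_deriv)
qed

lemma deriv2_mult_ball:
  assumes u: "u holomorphic_on ball 0 1" and v: "v holomorphic_on ball 0 1" and z: "z \<in> ball 0 1"
  shows "deriv (deriv (\<lambda>z. u z * v z)) z =
    deriv (deriv u) z * v z + 2 * deriv u z * deriv v z + u z * deriv (deriv v) z"
proof -
  have u': "deriv u holomorphic_on ball 0 1" and v': "deriv v holomorphic_on ball 0 1"
    using u v by (auto intro!: holomorphic_deriv)
  have ev: "eventually (\<lambda>x. deriv (\<lambda>z. u z * v z) x = deriv u x * v x + u x * deriv v x) (nhds z)"
    using eventually_nhds_in_open[OF open_ball z] by eventually_elim (rule deriv_mult_ball[OF u v])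
  have "deriv (deriv (\<lambda>z. u z * v z)) z = deriv (\<lambda>x. deriv u x * v x + u x * deriv v x) z"
    by (rule deriv_cong_ev[OF ev refl])
  also have "\<dots> = deriv (\<lambda>x. deriv u x * v x) z + deriv (\<lambda>x. u x * deriv v x) z"
    using u' v' u v z
    by (intro deriv_add) (auto intro!: holomorphic_on_imp_differentiable_at holomorphic_intros)
  also have "\<dots> = deriv (deriv u) z * v z + 2 * deriv u z * deriv v z + u z * deriv (deriv v) z"
    using deriv_mult_ball[OF u' v z] deriv_mult_ball[OF u v' z] by (simp add: algebra_simps)
  finally show ?thesis .
qed

lemma powr3:
  fixes a b c p :: real
  assumes "a \<ge> 0" "b \<ge> 0" "c \<ge> 0" "p > 0"
  shows "(a + b + c) powr p \<le> 3 powr p * (a powr p + b powr p + c powr p)"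
proof -
  define m where "m = max a (max b c)"
  have "a + b + c \<le> 3 * m" unfolding m_def by linarith
  then have "(a + b + c) powr p \<le> (3 * m) powr p" using assms by (intro powr_mono2) auto
  also have "\<dots> = 3 powr p * m powr p" using assms by (simp add: powr_mult m_def)
  also have "m powr p \<le> a powr p + b powr p + c powr p"
    unfolding m_def by (smt (verit) powr_ge_zero)
  finally show ?thesis by (simp add: mult_left_mono)
qed

lemma hs_hn: "p > 0 \<Longrightarrow> hs p f = hardy_norm p f powr p"
  using hs_nonneg[of p f] by (simp add: hardy_norm_hs powr_powr)

lemma S2p_norm_parts:
  "norm (f 0) \<le> S2p_norm p f" "norm (deriv f 0) \<le> S2p_norm p f"
  "hardy_norm p (deriv (deriv f)) \<le> S2p_norm p f" "S2p_norm p f \<ge> 0"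
  unfolding S2p_norm_def using hardy_norm_hs[of p "deriv (deriv f)"] by auto

lemma mult_S2p:
  assumes p: "p \<ge> 1" and \<psi>: "\<psi> \<in> S2p p"
  shows "bounded_mult_op (S2p p) (S2p_norm p) \<psi>"
proof -
  have p0: "p > 0" using p by simp
  note h\<psi> = S2p_holo[OF \<psi>]
  define K where "K = 2 * pi * S2p_norm p \<psi>"
  have K0: "K \<ge> 0" using S2p_norm_parts(4)[of p \<psi>] by (simp add: K_def)
  have K\<psi>: "norm (\<psi> z) \<le> K" "norm (deriv \<psi> z) \<le> K" if "z \<in> ball 0 1" for z
    using S2p_sup_bounds[OF p \<psi> that] by (auto simp: K_def)
  define N where "N = hs p (deriv (deriv \<psi>))"
  have N0: "N \<ge> 0" by (simp add: N_def hs_nonneg)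
  define Q where "Q = 3 powr p * ((2 * pi) powr p * N + K powr p + (2 * K * (2 * pi)) powr p)"
  have Q0: "Q \<ge> 0" using N0 by (simp add: Q_def)
  define C where "C = 3 * K + Q powr (1/p)"
  have main: "(\<lambda>z. \<psi> z * f z) \<in> S2p p \<and> S2p_norm p (\<lambda>z. \<psi> z * f z) \<le> C * S2p_norm p f"
    if f: "f \<in> S2p p" for f
  proof -
    note hf = S2p_holo[OF f]
    define nf where "nf = S2p_norm p f"
    have nf0: "nf \<ge> 0" using S2p_norm_parts(4) by (simp add: nf_def)
    have Kf: "norm (f z) \<le> 2 * pi * nf" "norm (deriv f z) \<le> 2 * pi * nf" if "z \<in> ball 0 1" for z
      using S2p_sup_bounds[OF p f that] by (auto simp: nf_def)
    have hpf: "(\<lambda>z. \<psi> z * f z) holomorphic_on ball 0 1" using h\<psi>(1) hf(1) by (intro holomorphic_intros)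
    define D where "D = deriv (deriv (\<lambda>z. \<psi> z * f z))"
    have hD: "D holomorphic_on ball 0 1" unfolding D_def using hpf by (intro holomorphic_deriv) auto
    have cD: "continuous_on (ball 0 1) D" using hD holomorphic_on_imp_continuous_on by blast
    have c1: "continuous_on (ball 0 1) (deriv (deriv \<psi>))" using h\<psi>(3) holomorphic_on_imp_continuous_on by blast
    have c2: "continuous_on (ball 0 1) (deriv (deriv f))" using hf(3) holomorphic_on_imp_continuous_on by blast
    define A where "A = 3 powr p * (2 * pi * nf) powr p"
    define B where "B = 3 powr p * K powr p"
    define Cc where "Cc = 3 powr p * (2 * K * (2 * pi * nf)) powr p"
    have pw: "norm (D z) powr p \<le> A * norm (deriv (deriv \<psi>) z) powr p + B * norm (deriv (deriv f) z) powr p + Cc"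
      if z: "z \<in> ball 0 1" for z
    proof -
      have Deq: "D z = deriv (deriv \<psi>) z * f z + 2 * deriv \<psi> z * deriv f z + \<psi> z * deriv (deriv f) z"
        unfolding D_def by (rule deriv2_mult_ball[OF h\<psi>(1) hf(1) z])
      have "norm (D z) \<le> (2 * pi * nf) * norm (deriv (deriv \<psi>) z) + 2 * K * (2 * pi * nf) + K * norm (deriv (deriv f) z)"
      proof -
        have "norm (D z) \<le> norm (deriv (deriv \<psi>) z * f z) + norm (2 * deriv \<psi> z * deriv f z) + norm (\<psi> z * deriv (deriv f) z)"
          unfolding Deq by (smt (verit) norm_triangle_ineq)
        also have "norm (deriv (deriv \<psi>) z * f z) \<le> (2 * pi * nf) * norm (deriv (deriv \<psi>) z)"
          using mult_right_mono[OF Kf(1)[OF z] norm_ge_zero[of "deriv (deriv \<psi>) z"]] by (simp add: norm_mult mult.commute)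
        also have "norm (2 * deriv \<psi> z * deriv f z) \<le> 2 * K * (2 * pi * nf)"
        proof -
          have "norm (deriv \<psi> z) * norm (deriv f z) \<le> K * (2 * pi * nf)"
            using K\<psi>(2)[OF z] Kf(2)[OF z] K0 by (intro mult_mono) auto
          then show ?thesis by (simp add: norm_mult)
        qed
        also have "norm (\<psi> z * deriv (deriv f) z) \<le> K * norm (deriv (deriv f) z)"
          using K\<psi>(1)[OF z] by (simp add: norm_mult mult_right_mono)
        finally show ?thesis by simp
      qed
      then have "norm (D z) powr p \<le> ((2 * pi * nf) * norm (deriv (deriv \<psi>) z) + 2 * K * (2 * pi * nf) + K * norm (deriv (deriv f) z)) powr p"
        using p0 by (intro powr_mono2) auto
      also have "\<dots> \<le> 3 powr p * (((2 * pi * nf) * norm (deriv (deriv \<psi>) z)) powr p + (2 * K * (2 * pi * nf)) powr p + (K * norm (deriv (deriv f) z)) powr p)"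
        using nf0 K0 p0 by (intro powr3) auto
      also have "\<dots> = A * norm (deriv (deriv \<psi>) z) powr p + B * norm (deriv (deriv f) z) powr p + Cc"
        using nf0 K0 by (simp add: A_def B_def Cc_def powr_mult algebra_simps)
      finally show ?thesis .
    qed
    have cmD: "cm p D r \<le> nf powr p * Q" if r: "r \<in> {0<..<1}" for r
    proof -
      have "cm p D r \<le> A * cm p (deriv (deriv \<psi>)) r + B * cm p (deriv (deriv f)) r + Cc"
        by (rule cm_mono[OF cD c1 c2 _ _ p0 pw]) (use r in auto)
      also have "\<dots> \<le> A * N + B * nf powr p + Cc"
      proof -
        have "cm p (deriv (deriv \<psi>)) r \<le> N" using cm_le_hs[OF h\<psi>(4) p0 r] by (simp add: N_def)
        moreover have "cm p (deriv (deriv f)) r \<le> nf powr p"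
        proof -
          have "cm p (deriv (deriv f)) r \<le> hs p (deriv (deriv f))" by (rule cm_le_hs[OF hf(4) p0 r])
          also have "\<dots> = hardy_norm p (deriv (deriv f)) powr p" by (rule hs_hn[OF p0])
          also have "\<dots> \<le> nf powr p" using S2p_norm_parts(3)[of p f] p0
            by (intro powr_mono2) (auto simp: nf_def hardy_norm_hs)
          finally show ?thesis .
        qed
        ultimately show ?thesis by (intro add_mono mult_left_mono) (auto simp: A_def B_def)
      qed
      also have "\<dots> = nf powr p * Q"
        using nf0 K0 by (simp add: A_def B_def Cc_def Q_def powr_mult algebra_simps)
      finally show ?thesis .
    qed
    have Dh: "D \<in> hardy p" using hD cmD hardy_iff[OF p0] by blast
    have inS: "(\<lambda>z. \<psi> z * f z) \<in> S2p p" using hpf Dh by (simp add: S2p_def D_def)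
    have "hs p D \<le> nf powr p * Q" by (rule hs_le[OF cD p0 cmD])
    then have hnD: "hardy_norm p D \<le> nf * Q powr (1/p)"
    proof -
      assume "hs p D \<le> nf powr p * Q"
      then have "hardy_norm p D \<le> (nf powr p * Q) powr (1/p)"
        unfolding hardy_norm_hs using p0 hs_nonneg by (intro powr_mono2) auto
      also have "\<dots> = nf * Q powr (1/p)" using nf0 Q0 p0 by (simp add: powr_mult powr_powr)
      finally show ?thesis .
    qed
    have d0: "deriv (\<lambda>z. \<psi> z * f z) 0 = deriv \<psi> 0 * f 0 + \<psi> 0 * deriv f 0"
      by (rule deriv_mult_ball[OF h\<psi>(1) hf(1)]) simp
    have b0: "norm (\<psi> 0) \<le> K" "norm (deriv \<psi> 0) \<le> K" using K\<psi>[of 0] by auto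
    have f0: "norm (f 0) \<le> nf" "norm (deriv f 0) \<le> nf" using S2p_norm_parts[where f=f and p=p] by (auto simp: nf_def)
    have "S2p_norm p (\<lambda>z. \<psi> z * f z) = norm (\<psi> 0 * f 0) + norm (deriv \<psi> 0 * f 0 + \<psi> 0 * deriv f 0) + hardy_norm p D"
      unfolding S2p_norm_def D_def d0 by simp
    also have "\<dots> \<le> K * nf + (K * nf + K * nf) + nf * Q powr (1/p)"
    proof -
      have "norm (\<psi> 0 * f 0) \<le> K * nf" using b0 f0 K0 by (simp add: norm_mult mult_mono)
      moreover have "norm (deriv \<psi> 0 * f 0 + \<psi> 0 * deriv f 0) \<le> K * nf + K * nf"
        using b0 f0 K0 norm_triangle_ineq[of "deriv \<psi> 0 * f 0" "\<psi> 0 * deriv f 0"]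
        by (smt (verit, best) mult_mono norm_ge_zero norm_mult)
      ultimately show ?thesis using hnD by linarith
    qed
    also have "\<dots> = C * nf" by (simp add: C_def algebra_simps)
    finally show ?thesis using inS by (simp add: nf_def)
  qed
  show ?thesis unfolding bounded_mult_op_def using main by blast
qed


lemma radial_exists:
  fixes F :: "complex \<Rightarrow> complex"
  assumes hF: "F holomorphic_on ball 0 1" and w: "norm w = 1"
    and B: "\<And>\<rho>. 0 \<le> \<rho> \<Longrightarrow> \<rho> < 1 \<Longrightarrow> integral {0..\<rho>} (\<lambda>t. norm (deriv F (of_real t * w))) \<le> B"
  shows "\<exists>L. ((\<lambda>r. F (of_real r * w)) \<longlongrightarrow> L) (at_left 1)"
proof -
  have hF': "deriv F holomorphic_on ball 0 1" using hF by (auto intro!: holomorphic_deriv)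
  then have cF': "continuous_on (ball 0 1) (deriv F)" using holomorphic_on_imp_continuous_on by blast
  define \<phi> where "\<phi> t = w * deriv F (of_real t * w)" for t
  define a where "a t = norm (deriv F (of_real t * w))" for t
  have na: "norm (\<phi> t) = a t" for t by (simp add: \<phi>_def a_def norm_mult w)
  have ca: "continuous_on {0..\<rho>} a" "continuous_on {0..\<rho>} \<phi>" if "\<rho> < 1" for \<rho>
    unfolding a_def \<phi>_def
    by (intro continuous_intros continuous_on_compose2[OF cF'];
        use that w in \<open>auto simp: norm_mult intro!: continuous_intros\<close>)+
  define s where "s k = 1 - 1 / (real k + 2)" for k :: nat
  have s: "0 \<le> s k" "s k < 1" for k by (auto simp: s_def field_simps)
  have smono: "s k \<le> s (Suc k)" for k by (auto simp: s_def field_simps)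
  have slim: "s \<longlonglongrightarrow> 1"
  proof -
    have "(\<lambda>k. 1 / (real k + 2)) \<longlonglongrightarrow> 0"
      by real_asymp
    from tendsto_diff[OF tendsto_const this, of 1] show ?thesis unfolding s_def by simp
  qed
  define fk where "fk k t = (if t \<in> {0..s k} then a t else 0)" for k t
  define g where "g t = (if t < 1 then a t else 0)" for t
  have ifk: "fk k integrable_on {0..1}" for k
    unfolding fk_def integrable_restrict_Int using s[of k]
    by (auto intro!: integrable_continuous_real ca simp: Int_absorb2)
  have intfk: "integral {0..1} (fk k) = integral {0..s k} a" for k
    unfolding fk_def integral_restrict_Int using s[of k] by (simp add: Int_absorb2)
  have conv_fk: "(\<lambda>k. fk k t) \<longlonglongrightarrow> g t" if "t \<in> {0..1}" for t
  proof (cases "t < 1")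
    case True
    have "eventually (\<lambda>k. t < s k) sequentially" using order_tendstoD(1)[OF slim True] .
    then have "eventually (\<lambda>k. fk k t = g t) sequentially"
      by eventually_elim (use that True in \<open>auto simp: fk_def g_def\<close>)
    then show ?thesis by (rule tendsto_eventually)
  next
    case False
    then have "fk k t = 0" "g t = 0" for k using s[of k] by (auto simp: fk_def g_def)
    then show ?thesis by simp
  qed
  have a0: "a t \<ge> 0" for t by (simp add: a_def)
  have gint: "g integrable_on {0..1}"
  proof (rule conjunct1[OF monotone_convergence_increasing[OF ifk _ conv_fk]])
    show "fk k t \<le> fk (Suc k) t" if "t \<in> {0..1}" for k t
      using smono[of k] a0[of t] by (auto simp: fk_def)
    show "bounded (range (\<lambda>k. integral {0..1} (fk k)))"
      unfolding bounded_iff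
    proof (intro exI[of _ B] allI ballI)
      fix y assume "y \<in> range (\<lambda>k. integral {0..1} (fk k))"
      then obtain k where y: "y = integral {0..s k} a" using intfk by auto
      have "y \<ge> 0" unfolding y by (intro integral_nonneg integrable_continuous_real ca s) (simp add: a0)
      moreover have "y \<le> B" using B[OF s(1) s(2), of k] unfolding y a_def by simp
      ultimately show "norm y \<le> B" by simp
    qed
  qed
  define \<phi>k where "\<phi>k k t = (if t \<in> {0..s k} then \<phi> t else 0)" for k t
  define \<psi> where "\<psi> t = (if t < 1 then \<phi> t else 0)" for t
  have i\<phi>k: "\<phi>k k integrable_on {0..1}" for k
    unfolding \<phi>k_def integrable_restrict_Int using s[of k]
    by (auto intro!: integrable_continuous_real ca simp: Int_absorb2)
  have conv_\<phi>k: "(\<lambda>k. \<phi>k k t) \<longlonglongrightarrow> \<psi> t" if "t \<in> {0..1}" for t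
  proof (cases "t < 1")
    case True
    have "eventually (\<lambda>k. t < s k) sequentially" using order_tendstoD(1)[OF slim True] .
    then have "eventually (\<lambda>k. \<phi>k k t = \<psi> t) sequentially"
      by eventually_elim (use that True in \<open>auto simp: \<phi>k_def \<psi>_def\<close>)
    then show ?thesis by (rule tendsto_eventually)
  next
    case False
    then have "\<phi>k k t = 0" "\<psi> t = 0" for k using s[of k] by (auto simp: \<phi>k_def \<psi>_def)
    then show ?thesis by simp
  qed
  have \<psi>int: "\<psi> integrable_on {0..1}"
  proof (rule dominated_convergence(1)[OF i\<phi>k gint _ conv_\<phi>k])
    fix k x assume x: "x \<in> {0..(1::real)}"
    show "norm (\<phi>k k x) \<le> g x"
    proof (cases "x \<in> {0..s k}")
      case True then show ?thesis using s[of k] by (auto simp: \<phi>k_def g_def na)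
    next
      case False then show ?thesis using a0[of x] by (auto simp: \<phi>k_def g_def)
    qed
  qed
  define I where "I x = integral {0..x} \<psi>" for x
  have "continuous_on {0..1} I" unfolding I_def by (rule indefinite_integral_continuous_1[OF \<psi>int])
  then have "(I \<longlongrightarrow> I 1) (at 1 within {0..1})" by (simp add: continuous_on_def)
  moreover have "at (1::real) within {0..1} = at_left 1" by (rule at_within_Icc_at_left) simp
  ultimately have Ilim: "(I \<longlongrightarrow> I 1) (at_left 1)" by simp
  have ev: "eventually (\<lambda>r. F 0 + I r = F (of_real r * w)) (at_left (1::real))"
  proof -
    have "eventually (\<lambda>r. r \<in> {0<..<1}) (at_left (1::real))" by (rule eventually_at_left_real) simp
    then show ?thesis
    proof (rule eventually_mono)
      fix r :: real assume "r \<in> {0<..<1}"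
      then have r: "r > 0" "r < 1" by auto
      have "I r = integral {0..r} \<phi>" unfolding I_def using r by (intro integral_cong) (auto simp: \<psi>_def)
      also have "\<dots> = F (of_real r * w) - F 0"
        using integral_unique[OF ray_ftc[OF hF w, of r]] r unfolding \<phi>_def by simp
      finally show "F 0 + I r = F (of_real r * w)" by simp
    qed
  qed
  have "((\<lambda>r. F 0 + I r) \<longlongrightarrow> F 0 + I 1) (at_left 1)" by (intro tendsto_intros Ilim)
  then have "((\<lambda>r. F (of_real r * w)) \<longlongrightarrow> F 0 + I 1) (at_left 1)"
    by (rule Lim_transform_eventually[OF _ ev])
  then show ?thesis by blast
qed

lemma radial_limit_bound:
  fixes F :: "complex \<Rightarrow> complex"
  assumes ex: "\<exists>L. ((\<lambda>r. F (of_real r * w)) \<longlongrightarrow> L) (at_left 1)"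
    and K: "\<And>r. 0 < r \<Longrightarrow> r < 1 \<Longrightarrow> norm (F (of_real r * w)) \<le> K"
  shows "norm (radial_limit F w) \<le> K"
proof -
  obtain L where L: "((\<lambda>r. F (of_real r * w)) \<longlongrightarrow> L) (at_left 1)" using ex by blast
  have "radial_limit F w = L" unfolding radial_limit_def using L by (simp add: tendsto_Lim)
  moreover have "norm L \<le> K"
  proof (rule Lim_norm_ubound[OF _ L])
    show "eventually (\<lambda>r. norm (F (of_real r * w)) \<le> K) (at_left (1::real))"
      using eventually_at_left_real[of 0 1]
      by (rule eventually_mono) (use K in auto)
  qed simp
  ultimately show ?thesis by simp
qed


lemma poisson_eq:
  "Re ((cis t + a) / (cis t - a)) = (1 - (norm a)^2) / (norm (1 - cnj a * cis t))^2"
proof -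
  have e: "norm (cis t - a) = norm (1 - cnj a * cis t)" by (rule blaschke_eq) simp
  have "Re ((cis t + a) / (cis t - a)) = (Re (cis t + a) * Re (cis t - a) + Im (cis t + a) * Im (cis t - a)) / (norm (cis t - a))^2"
    by (simp add: Re_divide cmod_power2)
  also have "Re (cis t + a) * Re (cis t - a) + Im (cis t + a) * Im (cis t - a) = ((cos t)^2 + (sin t)^2) - ((Re a)^2 + (Im a)^2)"
    by (simp add: algebra_simps power2_eq_square)
  also have "\<dots> = 1 - (norm a)^2" by (simp add: cmod_power2)
  finally show ?thesis using e by simp
qed

lemma poisson_integral:
  assumes a: "norm a < 1"
  shows "((\<lambda>t. (1 - (norm a)^2) / (norm (1 - cnj a * cis t))^2) has_integral 2 * pi) {0..2*pi}"
proof -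
  have c1: "((\<lambda>u. 2 / (u - a)) has_contour_integral (2 * of_real pi * \<i> * 2)) (circlepath 0 1)"
    using Cauchy_integral_circlepath_simple[of "\<lambda>_. 2" 0 1 a] a by auto
  have c2: "((\<lambda>u. 1 / (u - 0)) has_contour_integral (2 * of_real pi * \<i> * 1)) (circlepath 0 1)"
    using Cauchy_integral_circlepath_simple[of "\<lambda>_. 1" 0 1 0] by auto
  have "((\<lambda>u. 2 / (u - a) - 1 / (u - 0)) has_contour_integral (2 * of_real pi * \<i>)) (circlepath 0 1)"
    using has_contour_integral_diff[OF c1 c2] by (simp add: algebra_simps)
  then have "((\<lambda>t. (2 / (cis t - a) - 1 / (cis t - 0)) * 1 * \<i> * cis t) has_integral (2 * of_real pi * \<i>)) {0..2*pi}"
    unfolding circlepath_def by (subst (asm) has_contour_integral_part_circlepath_iff) auto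
  moreover have "(2 / (cis t - a) - 1 / (cis t - 0)) * 1 * \<i> * cis t = \<i> * ((cis t + a) / (cis t - a))" if "t \<in> {0..2*pi}" for t
  proof -
    have "cis t - a \<noteq> 0" using a by (metis norm_cis order_less_irrefl right_minus_eq)
    moreover have "cis t \<noteq> 0" by simp
    ultimately show ?thesis by (simp add: field_simps)
  qed
  ultimately have "((\<lambda>t. \<i> * ((cis t + a) / (cis t - a))) has_integral (2 * of_real pi * \<i>)) {0..2*pi}"
    using has_integral_cong by (metis (no_types, lifting))
  from has_integral_mult_right[OF this, of "-\<i>"]
  have "((\<lambda>t. (cis t + a) / (cis t - a)) has_integral (2 * of_real pi)) {0..2*pi}"
    by (simp add: algebra_simps)
  from has_integral_Re[OF this] show ?thesis by (simp add: poisson_eq)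
qed

lemma poisson_sup_bound:
  assumes K: "K \<ge> 0" and rl: "\<And>\<theta>. norm (radial_limit g (cis \<theta>)) \<le> K" and p: "p > 0"
  shows "poisson_sup p g \<le> ennreal (K powr p)"
  unfolding poisson_sup_def
proof (rule SUP_least)
  fix a :: complex assume a: "a \<in> ball 0 1"
  then have na: "norm a < 1" by simp
  define P where "P \<theta> = (1 - (norm a)^2) / (norm (1 - cnj a * cis \<theta>))^2" for \<theta>
  have P0: "P \<theta> \<ge> 0" for \<theta>
  proof -
    have "(norm a)^2 \<le> 1" using na by (simp add: abs_square_le_1)
    then show ?thesis unfolding P_def by simp
  qed
  have hi: "((\<lambda>\<theta>. P \<theta> * K powr p) has_integral (2 * pi * K powr p)) {0..2*pi}"
    using has_integral_mult_left[OF poisson_integral[OF na], of "K powr p"] by (simp add: P_def)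
  from nn_integral_has_integral_lebesgue[OF _ hi]
  have eq: "(\<integral>\<^sup>+ \<theta>. ennreal (indicator {0..2*pi} \<theta> * (P \<theta> * K powr p)) \<partial>lborel) = ennreal (2 * pi * K powr p)"
    using P0 by simp
  have "(\<integral>\<^sup>+ \<theta>. indicator {0..2*pi} \<theta> * ennreal (P \<theta> * norm (radial_limit g (cis \<theta>)) powr p) \<partial>lborel)
      \<le> (\<integral>\<^sup>+ \<theta>. ennreal (indicator {0..2*pi} \<theta> * (P \<theta> * K powr p)) \<partial>lborel)"
  proof (rule nn_integral_mono)
    fix \<theta> :: real
    have "P \<theta> * norm (radial_limit g (cis \<theta>)) powr p \<le> P \<theta> * K powr p"
      using rl[of \<theta>] p P0[of \<theta>] by (intro mult_left_mono powr_mono2) auto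
    then show "indicator {0..2*pi} \<theta> * ennreal (P \<theta> * norm (radial_limit g (cis \<theta>)) powr p)
       \<le> ennreal (indicator {0..2*pi} \<theta> * (P \<theta> * K powr p))"
      by (auto simp: indicator_def ennreal_leI)
  qed
  then have "ennreal (1 / (2 * pi)) * (\<integral>\<^sup>+ \<theta>. indicator {0..2*pi} \<theta> * ennreal (P \<theta> * norm (radial_limit g (cis \<theta>)) powr p) \<partial>lborel)
      \<le> ennreal (1 / (2 * pi)) * ennreal (2 * pi * K powr p)"
    unfolding eq by (rule mult_left_mono) simp
  also have "\<dots> = ennreal (K powr p)" by (simp add: ennreal_mult'[symmetric])
  finally show "ennreal (1 / (2 * pi)) * (\<integral>\<^sup>+ \<theta>. indicator {0..2*pi} \<theta> *
           ennreal ((1 - (norm a)\<^sup>2) / (norm (1 - cnj a * cis \<theta>))\<^sup>2 *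
                    norm (radial_limit g (cis \<theta>)) powr p) \<partial>lborel) \<le> ennreal (K powr p)"
    unfolding P_def .
qed


lemma one_S2p:
  assumes p: "p > 0"
  shows "(\<lambda>z. 1) \<in> S2p p"
proof -
  have d: "deriv (deriv (\<lambda>z::complex. 1::complex)) = (\<lambda>z. 0)"
    by (simp add: fun_eq_iff)
  have "(\<lambda>z::complex. 0::complex) \<in> hardy p"
    unfolding hardy_iff[OF p] using p by (auto simp: cm_def)
  then show ?thesis unfolding S2p_def d by auto
qed

lemma S2p_consequences:
  assumes p: "p \<ge> 1" and \<psi>: "\<psi> \<in> S2p p"
  shows "bounded_mult_op (S2p p) (S2p_norm p) \<psi>"
    "bounded_mult_op (hardy p) (hardy_norm p) (\<lambda>z. 2 * deriv \<psi> z)"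
    "bounded_mult_op (hardy p) (hardy_norm p) \<psi>"
    "poisson_sup p (\<lambda>z. 2 * deriv \<psi> z) < \<infinity>"
    "poisson_sup p \<psi> < \<infinity>"
proof -
  have p0: "p > 0" using p by simp
  note h = S2p_holo[OF \<psi>]
  define K where "K = 2 * pi * S2p_norm p \<psi>"
  have K0: "K \<ge> 0" using S2p_norm_parts(4)[of p \<psi>] by (simp add: K_def)
  have K\<psi>: "norm (\<psi> z) \<le> K" "norm (deriv \<psi> z) \<le> K" if "z \<in> ball 0 1" for z
    using S2p_sup_bounds[OF p \<psi> that] by (auto simp: K_def)
  have K2: "norm (2 * deriv \<psi> z) \<le> 2 * K" if "z \<in> ball 0 1" for z
    using K\<psi>(2)[OF that] by (simp add: norm_mult)
  have h2: "(\<lambda>z. 2 * deriv \<psi> z) holomorphic_on ball 0 1" by (rule holomorphic_on_mult[OF holomorphic_on_const h(2)])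
  show "bounded_mult_op (S2p p) (S2p_norm p) \<psi>" by (rule mult_S2p[OF p \<psi>])
  show "bounded_mult_op (hardy p) (hardy_norm p) (\<lambda>z. 2 * deriv \<psi> z)"
    by (rule bounded_mult_hardy[OF p0 h2 K2])
  show "bounded_mult_op (hardy p) (hardy_norm p) \<psi>"
    by (rule bounded_mult_hardy[OF p0 h(1) K\<psi>(1)])
  have "norm (radial_limit (\<lambda>z. 2 * deriv \<psi> z) (cis \<theta>)) \<le> 2 * K" for \<theta>
  proof (rule radial_limit_bound)
    have w: "norm (cis \<theta>) = 1" by simp
    show "\<exists>L. ((\<lambda>r. 2 * deriv \<psi> (of_real r * cis \<theta>)) \<longlongrightarrow> L) (at_left 1)"
    proof (rule radial_exists[OF h2 w])
      fix \<rho> :: real assume \<rho>: "0 \<le> \<rho>" "\<rho> < 1"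
      have dd: "deriv (\<lambda>z. 2 * deriv \<psi> z) (of_real t * cis \<theta>) = 2 * deriv (deriv \<psi>) (of_real t * cis \<theta>)"
        if "t \<in> {0..\<rho>}" for t
      proof -
        have "of_real t * cis \<theta> \<in> ball 0 1" using that \<rho> by (simp add: norm_mult)
        from holomorphic_derivI[OF h(2) open_ball this]
        show ?thesis by (intro DERIV_imp_deriv) (auto intro!: derivative_eq_intros)
      qed
      have "integral {0..\<rho>} (\<lambda>t. norm (deriv (\<lambda>z. 2 * deriv \<psi> z) (of_real t * cis \<theta>)))
          = integral {0..\<rho>} (\<lambda>t. 2 * norm (deriv (deriv \<psi>) (of_real t * cis \<theta>)))"
        by (rule integral_cong) (simp add: dd norm_mult)
      also have "\<dots> = 2 * integral {0..\<rho>} (\<lambda>t. norm (deriv (deriv \<psi>) (of_real t * cis \<theta>)))"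
        by simp
      also have "\<dots> \<le> 2 * (pi * (2 * hardy_norm p (deriv (deriv \<psi>))))"
        by (intro mult_left_mono CORE[OF h(3) _ w \<rho>]) (use cm1_le[OF p h(4)] in auto)
      finally show "integral {0..\<rho>} (\<lambda>t. norm (deriv (\<lambda>z. 2 * deriv \<psi> z) (of_real t * cis \<theta>)))
          \<le> 2 * (pi * (2 * hardy_norm p (deriv (deriv \<psi>))))" .
    qed
    fix r :: real assume "0 < r" "r < 1"
    then show "norm (2 * deriv \<psi> (of_real r * cis \<theta>)) \<le> 2 * K" by (intro K2) (simp add: norm_mult)
  qed
  then have "poisson_sup p (\<lambda>z. 2 * deriv \<psi> z) \<le> ennreal ((2 * K) powr p)"
    using K0 p0 by (intro poisson_sup_bound) auto
  then show "poisson_sup p (\<lambda>z. 2 * deriv \<psi> z) < \<infinity>" using le_less_trans by fastforce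
  have "norm (radial_limit \<psi> (cis \<theta>)) \<le> K" for \<theta>
  proof (rule radial_limit_bound)
    have w: "norm (cis \<theta>) = 1" by simp
    show "\<exists>L. ((\<lambda>r. \<psi> (of_real r * cis \<theta>)) \<longlongrightarrow> L) (at_left 1)"
    proof (rule radial_exists[OF h(1) w])
      fix \<rho> :: real assume \<rho>: "0 \<le> \<rho>" "\<rho> < 1"
      have c: "continuous_on (ball 0 1) (deriv \<psi>)" using h(2) holomorphic_on_imp_continuous_on by blast
      have i: "(\<lambda>t. norm (deriv \<psi> (of_real t * cis \<theta>))) integrable_on {0..\<rho>}"
        by (intro integrable_continuous_real continuous_intros continuous_on_compose2[OF c])
           (use \<rho> in \<open>auto simp: norm_mult intro!: continuous_intros\<close>)
      have "integral {0..\<rho>} (\<lambda>t. norm (deriv \<psi> (of_real t * cis \<theta>))) \<le> integral {0..\<rho>} (\<lambda>t. K)"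
        by (rule integral_le[OF i]) (use \<rho> K\<psi>(2) in \<open>auto simp: norm_mult\<close>)
      also have "\<dots> = \<rho> * K" using \<rho> by simp
      also have "\<dots> \<le> 1 * K" using \<rho> K0 by (intro mult_right_mono) auto
      finally show "integral {0..\<rho>} (\<lambda>t. norm (deriv \<psi> (of_real t * cis \<theta>))) \<le> K" by simp
    qed
    fix r :: real assume "0 < r" "r < 1"
    then show "norm (\<psi> (of_real r * cis \<theta>)) \<le> K" by (intro K\<psi>(1)) (simp add: norm_mult)
  qed
  then have "poisson_sup p \<psi> \<le> ennreal (K powr p)"
    using K0 p0 by (intro poisson_sup_bound) auto
  then show "poisson_sup p \<psi> < \<infinity>" using le_less_trans by fastforce
qed

theorem corollary2p5:
  fixes p :: real and \<psi> :: "complex \<Rightarrow> complex"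
  assumes "1 \<le> p" and "\<psi> holomorphic_on ball 0 1"
  shows "(bounded_mult_op (S2p p) (S2p_norm p) \<psi> \<longleftrightarrow>
            \<psi> \<in> S2p p \<and>
            bounded_mult_op (hardy p) (hardy_norm p) (\<lambda>z. 2 * deriv \<psi> z) \<and>
            bounded_mult_op (hardy p) (hardy_norm p) \<psi>) \<and>
         (\<psi> \<in> S2p p \<and>
            bounded_mult_op (hardy p) (hardy_norm p) (\<lambda>z. 2 * deriv \<psi> z) \<and>
            bounded_mult_op (hardy p) (hardy_norm p) \<psi>
          \<longleftrightarrow>
          \<psi> \<in> S2p p \<and>
            poisson_sup p (\<lambda>z. 2 * deriv \<psi> z) < \<infinity> \<and>
            poisson_sup p \<psi> < \<infinity>)"
proof -
  have p0: "p > 0" using assms(1) by simp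
  have a2s: "\<psi> \<in> S2p p" if "bounded_mult_op (S2p p) (S2p_norm p) \<psi>"
  proof -
    have "\<forall>f\<in>S2p p. (\<lambda>z. \<psi> z * f z) \<in> S2p p" using that unfolding bounded_mult_op_def by blast
    then have "(\<lambda>z. \<psi> z * (\<lambda>z. 1) z) \<in> S2p p" using one_S2p[OF p0] by (rule bspec)
    then show ?thesis by simp
  qed
  show ?thesis using a2s S2p_consequences[OF assms(1)] by blast
qed


end
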